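(* Let $f\in\mathcal S_{\mathbf M}$, let $\|\cdot\|$ be either the Luxemburg norm $\|\cdot\|_{\mathbf M}$ or the Orlicz norm $\|\cdot\|^*_{\mathbf M}$ (the same choice throughout), and suppose that for some $\beta>0$, $E_n(f)=\mathcal O(n^{-\beta})$ as $n\to\infty$. Then for any $\alpha>0$, as $t\to0+$, $$\omega_\alpha(f,t)=\begin{cases}\mathcal O(t^\beta), & \beta<\alpha,\\ \mathcal O(t^\alpha|\ln t|), & \beta=\alpha,\\ \mathcal O(t^\alpha), & \beta>\alpha.\end{cases}$$
   Context: $L$ is the space of $2\pi$-periodic Lebesgue integrable functions, with Fourier coefficients $\widehat f(k)=(2\pi)^{-1}\int_0^{2\pi}f(x)e^{-\mathrm{i}kx}\,dx$. Let $\mathbf M=\{M_k\}_{k\in\mathbb Z}$ be a sequence of Orlicz functions on $[0,\infty)$ (nondecreasing, convex, $M_k(0)=0$, $M_k(u)\to\infty$ as $u\to\infty$). For a complex sequence $c=\{c_k\}_{k\in\mathbb Z}$: Luxemburg norm $\|c\|_{\mathbf M}=\inf\{a>0:\sum_kM_k(|c_k|/a)\le1\}$; with $\tilde M_k(v)=\sup\{uv-M_k(u):u\ge0\}$ and $\Lambda$ the set of positive sequences $\lambda$ with $\sum_k\tilde M_k(\lambda_k)\le1$, Orlicz norm $\|c\|^*_{\mathbf M}=\sup\{\sum_k\lambda_k|c_k|:\lambda\in\Lambda\}$. $\mathcal S_{\mathbf M}$ is the space of $f\in L$ with $\|\{\widehat f(k)\}\|_{\mathbf M}<\infty$; norms of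 $f$ are those of $\{\widehat f(k)\}$. $E_n(f)=\inf\{\|f-t\|:t\in\mathcal T_{n-1}\}$, $\mathcal T_{n-1}$ the trigonometric polynomials $\sum_{|k|\le n-1}c_ke^{\mathrm{i}kx}$. For $\alpha>0$, $\Delta_h^\alpha f(x)=\sum_{j\ge0}(-1)^j\binom{\alpha}{j}f(x-jh)$, with Fourier coefficients $(1-e^{-\mathrm{i}kh})^\alpha\widehat f(k)$, and $\omega_\alpha(f,\delta)=\sup_{|h|\le\delta}\|\Delta_h^\alpha f\|$. *)

theory Defs
  imports "HOL-Analysis.Analysis" "HOL-Library.Landau_Symbols"
begin

definition in_L :: "(real \<Rightarrow> complex) \<Rightarrow> bool" where
  "in_L f \<longleftrightarrow> set_integrable lborel {0..2*pi} f \<and> (\<forall>x. f (x + 2*pi) = f x)"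

definition fourier_coeff :: "(real \<Rightarrow> complex) \<Rightarrow> int \<Rightarrow> complex" where
  "fourier_coeff f k =
     set_lebesgue_integral lborel {0..2*pi} (\<lambda>x. f x * exp (- \<i> * of_int k * of_real x)) / (2 * pi)"

text \<open>Orlicz function (only its values on [0,oo) matter).\<close>
definition orlicz_fn :: "(real \<Rightarrow> real) \<Rightarrow> bool" where
  "orlicz_fn M \<longleftrightarrow> mono_on {0..} M \<and> convex_on {0..} M \<and> M 0 = 0 \<and> filterlim M at_top at_top"

definition lux_set :: "(int \<Rightarrow> real \<Rightarrow> real) \<Rightarrow> (int \<Rightarrow> complex) \<Rightarrow> real set" where
  "lux_set Ms c = {a. a > 0 \<and> (\<lambda>k. Ms k (cmod (c k) / a)) summable_on UNIV
                       \<and> (\<Sum>\<^sub>\<infinity>k. Ms k (cmod (c k) / a)) \<le> 1}"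

definition lux_norm :: "(int \<Rightarrow> real \<Rightarrow> real) \<Rightarrow> (int \<Rightarrow> complex) \<Rightarrow> real" where
  "lux_norm Ms c = Inf (lux_set Ms c)"

text \<open>Complementary function (the sup is finite exactly when the set is bounded above).\<close>
definition conj_fn :: "(real \<Rightarrow> real) \<Rightarrow> real \<Rightarrow> real" where
  "conj_fn M v = Sup ((\<lambda>u. u * v - M u) ` {0..})"

definition Lambda_set :: "(int \<Rightarrow> real \<Rightarrow> real) \<Rightarrow> (int \<Rightarrow> real) set" where
  "Lambda_set Ms = {lam. (\<forall>k. lam k \<ge> 0 \<and> bdd_above ((\<lambda>u. u * lam k - Ms k u) ` {0..}))
        \<and> (\<lambda>k. conj_fn (Ms k) (lam k)) summable_on UNIV
        \<and> (\<Sum>\<^sub>\<infinity>k. conj_fn (Ms k) (lam k)) \<le> 1}"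

definition orlicz_norm :: "(int \<Rightarrow> real \<Rightarrow> real) \<Rightarrow> (int \<Rightarrow> complex) \<Rightarrow> real" where
  "orlicz_norm Ms c = Sup ((\<lambda>lam. \<Sum>\<^sub>\<infinity>k. lam k * cmod (c k)) ` Lambda_set Ms)"

text \<open>Membership in S_M: the Luxemburg norm of the Fourier coefficients is finite.\<close>
definition in_SM :: "(int \<Rightarrow> real \<Rightarrow> real) \<Rightarrow> (real \<Rightarrow> complex) \<Rightarrow> bool" where
  "in_SM Ms f \<longleftrightarrow> in_L f \<and> lux_set Ms (fourier_coeff f) \<noteq> {}"

definition fnorm :: "((int \<Rightarrow> complex) \<Rightarrow> real) \<Rightarrow> (real \<Rightarrow> complex) \<Rightarrow> real" where
  "fnorm N f = N (fourier_coeff f)"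

definition trig_polys :: "int \<Rightarrow> (real \<Rightarrow> complex) set" where
  "trig_polys m = {t. \<exists>c::int \<Rightarrow> complex. t = (\<lambda>x. \<Sum>k\<in>{-m..m}. c k * exp (\<i> * of_int k * of_real x))}"

definition best_approx :: "((int \<Rightarrow> complex) \<Rightarrow> real) \<Rightarrow> (real \<Rightarrow> complex) \<Rightarrow> nat \<Rightarrow> real" where
  "best_approx N f n = Inf ((\<lambda>t. fnorm N (\<lambda>x. f x - t x)) ` trig_polys (int n - 1))"

definition frac_diff :: "real \<Rightarrow> real \<Rightarrow> (real \<Rightarrow> complex) \<Rightarrow> real \<Rightarrow> complex" where
  "frac_diff \<alpha> h f x = (\<Sum>j. of_real ((-1) ^ j * (\<alpha> gchoose j)) * f (x - real j * h))"

definition modulus :: "((int \<Rightarrow> complex) \<Rightarrow> real) \<Rightarrow> real \<Rightarrow> (real \<Rightarrow> complex) \<Rightarrow> real \<Rightarrow> real" where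
  "modulus N \<alpha> f \<delta> = Sup ((\<lambda>h. fnorm N (frac_diff \<alpha> h f)) ` {h. \<bar>h\<bar> \<le> \<delta>})"

end

theory Submission
  imports Defs
begin


lemma of_real_gchoose: "of_real (a gchoose k) = ((of_real a :: 'a::{real_field,field_char_0}) gchoose k)"
  by (simp add: gbinomial_mult_fact'[symmetric] of_real_prod gbinomial_altdef_of_nat of_real_divide)

lemma gchoose_rec: "of_nat (Suc j) * (a gchoose Suc j) = (a - of_nat j) * (a gchoose j)"
  for a :: real
  using gbinomial_mult_1[of a j] by (simp add: algebra_simps)

lemma coef_summable:
  fixes \<alpha> :: real assumes a: "\<alpha> > 0"
  shows "summable (\<lambda>j. \<bar>\<alpha> gchoose j\<bar>)"
proof -
  define J where "J = nat \<lceil>\<alpha>\<rceil>"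
  define A where "A = (\<lambda>j. \<bar>\<alpha> gchoose j\<bar>)"
  have stp: "real (Suc j) * A (Suc j) = (real j - \<alpha>) * A j" if "j \<ge> J" for j
  proof -
    have "real j \<ge> \<alpha>" using that unfolding J_def by linarith
    then show ?thesis using arg_cong[OF gchoose_rec[of j \<alpha>], of abs]
      unfolding A_def by (simp add: abs_mult)
  qed
  have key: "\<alpha> * (\<Sum>j<n. A j) + real n * A n = \<alpha> * (\<Sum>j<J. A j) + real J * A J" if "n \<ge> J" for n
    using that
  proof (induction n rule: dec_induct)
    case (step n)
    have "\<alpha> * (\<Sum>j<Suc n. A j) + real (Suc n) * A (Suc n) = \<alpha> * (\<Sum>j<n. A j) + \<alpha> * A n + (real n - \<alpha>) * A n"
      using stp[OF step(1)] by (simp add: algebra_simps)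
    also have "\<dots> = \<alpha> * (\<Sum>j<n. A j) + real n * A n" by (simp add: algebra_simps)
    finally show ?case using step by simp
  qed simp
  have bnd: "(\<Sum>j<n. A j) \<le> (\<Sum>j<J. A j) + real J * A J / \<alpha>" for n
  proof (cases "n \<ge> J")
    case True
    have "\<alpha> * (\<Sum>j<n. A j) \<le> \<alpha> * (\<Sum>j<J. A j) + real J * A J"
      using key[OF True] by (smt (verit) A_def abs_ge_zero mult_nonneg_nonneg of_nat_0_le_iff)
    then show ?thesis using a by (simp add: field_simps)
  next
    case False
    have "(\<Sum>j<n. A j) \<le> (\<Sum>j<J. A j)" using False by (intro sum_mono2) (auto simp: A_def)
    moreover have "real J * A J / \<alpha> \<ge> 0" using a by (simp add: A_def)
    ultimately show ?thesis by linarith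
  qed
  show ?thesis unfolding A_def[symmetric]
    by (rule summableI_nonneg_bounded[OF _ bnd]) (simp add: A_def)
qed



lemma cmod_1_minus_cis: "cmod (1 - exp (\<i> * complex_of_real \<theta>)) = 2 * \<bar>sin (\<theta>/2)\<bar>"
proof -
  have "cmod (1 - exp (\<i> * complex_of_real \<theta>)) = sqrt ((1 - cos \<theta>)^2 + (sin \<theta>)^2)"
    by (simp add: cis_conv_exp[symmetric] cmod_def power2_eq_square)
  also have "(1 - cos \<theta>)^2 + (sin \<theta>)^2 = 2 - 2 * cos \<theta>"
    using sin_cos_squared_add[of \<theta>] by (simp add: power2_eq_square algebra_simps)
  also have "cos \<theta> = 1 - 2 * sin (\<theta>/2)^2" using cos_double_sin[of "\<theta>/2"] by simp
  also have "2 - 2 * (1 - 2 * sin (\<theta>/2)^2) = (2 * sin (\<theta>/2))^2" by (simp add: power2_eq_square)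
  also have "sqrt ((2 * sin (\<theta>/2))^2) = 2 * \<bar>sin (\<theta>/2)\<bar>" by (simp only: real_sqrt_abs abs_mult)
  finally show ?thesis .
qed

lemma cmod_1_minus_cis_le: "cmod (1 - exp (\<i> * complex_of_real \<theta>)) \<le> \<bar>\<theta>\<bar>"
  "cmod (1 - exp (\<i> * complex_of_real \<theta>)) \<le> 2"
  using abs_sin_x_le_abs_x[of "\<theta>/2"] abs_sin_le_one[of "\<theta>/2"] by (simp_all add: cmod_1_minus_cis)

lemma multiplier_abs:
  fixes \<alpha> :: real and z :: complex
  assumes a: "\<alpha> > 0" and z: "cmod z = 1"
  shows "summable (\<lambda>j. norm (complex_of_real ((-1)^j * (\<alpha> gchoose j)) * z^j))"
    and "cmod (\<Sum>j. complex_of_real ((-1)^j * (\<alpha> gchoose j)) * z^j) = cmod (1 - z) powr \<alpha>"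
proof -
  define c where "c j = (-1)^j * (\<alpha> gchoose j)" for j
  have abc: "\<bar>c j\<bar> = \<bar>\<alpha> gchoose j\<bar>" for j by (simp add: c_def abs_mult)
  have sc: "summable (\<lambda>j. \<bar>c j\<bar>)" unfolding abc by (rule coef_summable[OF a])
  show "summable (\<lambda>j. norm (complex_of_real ((-1)^j * (\<alpha> gchoose j)) * z^j))"
    using sc by (simp add: c_def norm_mult norm_power z abs_mult)
  define g where "g r = (\<Sum>j. complex_of_real (c j) * (complex_of_real r * z)^j)" for r :: real
  have bnd: "norm (complex_of_real (c j) * (complex_of_real r * z)^j) \<le> \<bar>c j\<bar>" if "r \<in> {0..1}" for r j
  proof -
    have "\<bar>r\<bar>^j \<le> 1" using that by (intro power_le_one) auto
    then show ?thesis by (simp add: norm_mult norm_power z mult_left_le)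
  qed
  have ul: "uniform_limit {0..1} (\<lambda>n r. \<Sum>i<n. complex_of_real (c i) * (complex_of_real r * z)^i) g sequentially"
    unfolding g_def by (rule Weierstrass_m_test[OF bnd sc]) 
  have cont: "continuous_on {0..1} g"
    proof (rule uniform_limit_theorem[OF always_eventually[OF allI] ul])
    fix n show "continuous_on {0..1} (\<lambda>r. \<Sum>i<n. complex_of_real (c i) * (complex_of_real r * z)^i)"
      by (intro continuous_intros)
  qed simp
  have gval: "g r = (1 + - (complex_of_real r * z)) powr complex_of_real \<alpha>" if "0 \<le> r" "r < 1" for r
  proof -
    have "norm (- (complex_of_real r * z)) = r" using that by (simp add: norm_mult z)
    then have "norm (- (complex_of_real r * z)) < 1" using that by linarith
    from gen_binomial_complex[OF this, of "complex_of_real \<alpha>"]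
    have S: "(\<lambda>n. (complex_of_real \<alpha> gchoose n) * (- (complex_of_real r * z))^n) sums (1 + - (complex_of_real r * z)) powr complex_of_real \<alpha>" .
    have E: "(complex_of_real \<alpha> gchoose n) * (- (complex_of_real r * z))^n = complex_of_real (c n) * (complex_of_real r * z)^n" for n
      using power_minus[of "complex_of_real r * z" n] unfolding c_def of_real_mult of_real_power of_real_minus of_real_1 of_real_gchoose by (simp only: mult_ac)
    show ?thesis unfolding g_def using sums_unique[OF S] E by simp
  qed
  define s where "s n = 1 + - inverse (real (Suc n))" for n
  have s01: "0 \<le> s n" "s n < 1" for n by (auto simp: s_def field_simps)
  have slim: "s \<longlonglongrightarrow> 1"
    unfolding s_def by (rule LIMSEQ_inverse_real_of_nat_add_minus)
  have l1: "(\<lambda>n. cmod (g (s n))) \<longlonglongrightarrow> cmod (g 1)"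
  proof (rule tendsto_norm, rule continuous_on_tendsto_compose[OF cont slim])
    show "eventually (\<lambda>n. s n \<in> {0..1}) sequentially"
      using s01 by (intro always_eventually) (auto intro: less_imp_le)
  qed simp
  have l0: "(\<lambda>n. cmod (1 - complex_of_real (s n) * z)) \<longlonglongrightarrow> cmod (1 - complex_of_real 1 * z)"
    by (intro tendsto_norm tendsto_diff tendsto_const tendsto_mult tendsto_of_real slim)
  have l2: "(\<lambda>n. cmod (1 - complex_of_real (s n) * z) powr \<alpha>) \<longlonglongrightarrow> cmod (1 - z) powr \<alpha>"
    using tendsto_powr'[OF l0 tendsto_const, of \<alpha>] a by simp
  have "cmod (g (s n)) = cmod (1 - complex_of_real (s n) * z) powr \<alpha>" for n
    using gval[OF s01] by (simp add: norm_powr_real_powr' del: diff_conv_add_uminus)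
  then have "cmod (g 1) = cmod (1 - z) powr \<alpha>" using l1 l2 LIMSEQ_unique by auto
  then show "cmod (\<Sum>j. complex_of_real ((-1)^j * (\<alpha> gchoose j)) * z^j) = cmod (1 - z) powr \<alpha>"
    by (simp add: g_def c_def)
qed



lemma periodic_int:
  fixes g :: "real \<Rightarrow> 'a"
  assumes per: "\<And>x. g (x + T) = g x"
  shows "g (x + T * of_int m) = g x"
proof -
  have pos: "g (y + T * real n) = g y" for y n
    by (induction n) (simp_all add: algebra_simps per[of "y + T * real _", simplified algebra_simps])
  show ?thesis
  proof (cases "m \<ge> 0")
    case True then obtain n where "m = int n" by (metis nonneg_eq_int)
    then show ?thesis using pos by simp
  next
    case False then have "m = - int (nat (-m))" by simp
    then obtain n where "m = - int n" by blast
    then show ?thesis using pos[of "x - T * real n" n] by simp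
  qed
qed

lemma floor_mod_bounds:
  fixes s T :: real assumes T: "T > 0"
  shows "0 \<le> s - T * real_of_int \<lfloor>s / T\<rfloor>" "s - T * real_of_int \<lfloor>s / T\<rfloor> < T"
proof -
  have "real_of_int \<lfloor>s / T\<rfloor> \<le> s / T" by linarith
  from mult_right_mono[OF this, of T] T have "real_of_int \<lfloor>s / T\<rfloor> * T \<le> s" by simp
  then show "0 \<le> s - T * real_of_int \<lfloor>s / T\<rfloor>" by (simp add: mult.commute)
  have "s / T < real_of_int \<lfloor>s / T\<rfloor> + 1" by linarith
  from mult_strict_right_mono[OF this T] T have "s < (real_of_int \<lfloor>s / T\<rfloor> + 1) * T" by simp
  then show "s - T * real_of_int \<lfloor>s / T\<rfloor> < T" by (simp add: algebra_simps)
qed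

lemma periodic_meas:
  fixes g :: "real \<Rightarrow> 'a::{banach, second_countable_topology}"
  assumes per: "\<And>x. g (x + 2*pi) = g x"
    and int: "set_integrable lborel {0..2*pi} g"
  shows "g \<in> borel_measurable lborel"
proof -
  define G where "G y = indicator {0..2*pi} y *\<^sub>R g y" for y
  have Gm: "G \<in> borel_measurable lborel"
    using int unfolding set_integrable_def G_def by (rule borel_measurable_integrable)
  define \<phi> where "\<phi> x = x - 2*pi * real_of_int \<lfloor>x / (2*pi)\<rfloor>" for x
  have \<phi>m: "\<phi> \<in> borel_measurable lborel" unfolding \<phi>_def by measurable
  have eq: "g x = G (\<phi> x)" for x
  proof -
    have "0 \<le> \<phi> x" "\<phi> x \<le> 2*pi" unfolding \<phi>_def using floor_mod_bounds[of "2*pi" x] by auto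
    moreover have "g (\<phi> x) = g x"
      using periodic_int[of g "2*pi" x "- \<lfloor>x / (2*pi)\<rfloor>", OF per] unfolding \<phi>_def by simp
    ultimately show ?thesis unfolding G_def by simp
  qed
  have "(\<lambda>x. G (\<phi> x)) \<in> borel_measurable lborel"
    using measurable_compose[OF \<phi>m, of G borel] Gm by (simp add: comp_def)
  moreover have "g = (\<lambda>x. G (\<phi> x))" using eq by (intro ext) simp
  ultimately show ?thesis by simp
qed

lemma Icc_Ico_integral:
  fixes g :: "real \<Rightarrow> 'a::{banach, second_countable_topology}"
  assumes gm: "g \<in> borel_measurable lborel"
  shows "set_integrable lborel {0..T} g \<longleftrightarrow> set_integrable lborel {0..<T} g"
    and "set_lebesgue_integral lborel {0..T} g = set_lebesgue_integral lborel {0..<T} g"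
proof -
  have ae: "AE x in lborel. indicator {0..T} x *\<^sub>R g x = indicator {0..<T} x *\<^sub>R g x"
    using AE_lborel_singleton[of T] by eventually_elim (auto simp: indicator_def)
  show "set_integrable lborel {0..T} g \<longleftrightarrow> set_integrable lborel {0..<T} g"
    unfolding set_integrable_def using gm by (intro integrable_cong_AE[OF _ _ ae]) auto
  show "set_lebesgue_integral lborel {0..T} g = set_lebesgue_integral lborel {0..<T} g"
    unfolding set_lebesgue_integral_def using gm by (intro integral_cong_AE[OF _ _ ae]) auto
qed

lemma shift_Ico:
  fixes g :: "real \<Rightarrow> 'a::{banach, second_countable_topology}"
  assumes per: "\<And>x. g (x + T) = g x" and T: "T > 0" and r: "0 \<le> r" "r < T"
    and int: "integrable lborel (\<lambda>x. indicator {0..<T} x *\<^sub>R g x)"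
  shows "integrable lborel (\<lambda>x. indicator {0..<T} x *\<^sub>R g (x + r))"
    and "(\<integral>x. indicator {0..<T} x *\<^sub>R g (x + r) \<partial>lborel) = (\<integral>x. indicator {0..<T} x *\<^sub>R g x \<partial>lborel)"
proof -
  define H1 where "H1 y = indicator {r..<T} y *\<^sub>R g y" for y
  define H2 where "H2 y = indicator {0..<r} y *\<^sub>R g y" for y
  have i1: "integrable lborel H1"
    using set_integrable_subset[of lborel "{0..<T}" g "{r..<T}"] int r unfolding H1_def set_integrable_def by auto
  have i2: "integrable lborel H2"
    using set_integrable_subset[of lborel "{0..<T}" g "{0..<r}"] int r unfolding H2_def set_integrable_def by auto
  have split: "indicator {0..<T} y *\<^sub>R g y = H1 y + H2 y" for y
    using r by (auto simp: H1_def H2_def indicator_def)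
  have eq: "indicator {0..<T} x *\<^sub>R g (x + r) = H1 (r + 1 * x) + H2 ((r - T) + 1 * x)" for x
  proof -
    have "g (x + r) = g ((r - T) + 1 * x)" using per[of "(r - T) + 1 * x"] by (simp add: algebra_simps)
    then show ?thesis using r T by (auto simp: H1_def H2_def indicator_def algebra_simps)
  qed
  have j1: "integrable lborel (\<lambda>x. H1 (r + 1 * x))" using lborel_integrable_real_affine[OF i1, of 1 r] by simp
  have j2: "integrable lborel (\<lambda>x. H2 ((r - T) + 1 * x))" using lborel_integrable_real_affine[OF i2, of 1 "r - T"] by simp
  show "integrable lborel (\<lambda>x. indicator {0..<T} x *\<^sub>R g (x + r))"
    unfolding eq using Bochner_Integration.integrable_add[OF j1 j2] by simp
  have "(\<integral>x. indicator {0..<T} x *\<^sub>R g (x + r) \<partial>lborel) = (\<integral>x. H1 (r + 1 * x) \<partial>lborel) + (\<integral>x. H2 ((r - T) + 1 * x) \<partial>lborel)"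
    unfolding eq using Bochner_Integration.integral_add[OF j1 j2] by simp
  also have "\<dots> = (\<integral>x. H1 x \<partial>lborel) + (\<integral>x. H2 x \<partial>lborel)"
    using lborel_integral_real_affine[of 1 H1 r] lborel_integral_real_affine[of 1 H2 "r - T"] by simp
  also have "\<dots> = (\<integral>x. indicator {0..<T} x *\<^sub>R g x \<partial>lborel)"
    unfolding split using Bochner_Integration.integral_add[OF i1 i2] by simp
  finally show "(\<integral>x. indicator {0..<T} x *\<^sub>R g (x + r) \<partial>lborel) = (\<integral>x. indicator {0..<T} x *\<^sub>R g x \<partial>lborel)" .
qed

lemma shift_period:
  fixes g :: "real \<Rightarrow> 'a::{banach, second_countable_topology}"
  assumes per: "\<And>x. g (x + 2*pi) = g x"
    and int: "set_integrable lborel {0..2*pi} g"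
  shows "set_integrable lborel {0..2*pi} (\<lambda>x. g (x + s))"
    and "set_lebesgue_integral lborel {0..2*pi} (\<lambda>x. g (x + s)) = set_lebesgue_integral lborel {0..2*pi} g"
proof -
  define T where "T = 2*pi"
  have T: "T > 0" unfolding T_def by simp
  have per': "\<And>x. g (x + T) = g x" using per unfolding T_def .
  have gm: "g \<in> borel_measurable lborel" using periodic_meas[OF per int] .
  define r where "r = s - T * real_of_int \<lfloor>s / T\<rfloor>"
  have r: "0 \<le> r" "r < T" unfolding r_def using floor_mod_bounds[OF T, of s] by auto
  have gs: "g (x + s) = g (x + r)" for x
    using periodic_int[of g T "x + r" "\<lfloor>s / T\<rfloor>", OF per'] unfolding r_def by simp
  have gmb: "g \<in> borel_measurable borel" using gm by simp
  have sm: "(\<lambda>x. x + s) \<in> borel_measurable lborel" by simp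
  have gsm: "(\<lambda>x. g (x + s)) \<in> borel_measurable lborel" using measurable_compose[OF sm gmb] by simp
  have int0: "integrable lborel (\<lambda>x. indicator {0..<T} x *\<^sub>R g x)"
    using int Icc_Ico_integral(1)[OF gm, of T] unfolding T_def set_integrable_def by simp
  note sh = shift_Ico[OF per' T r int0]
  show "set_integrable lborel {0..2*pi} (\<lambda>x. g (x + s))"
    using Icc_Ico_integral(1)[OF gsm, of T] sh(1) unfolding gs T_def set_integrable_def by simp
  show "set_lebesgue_integral lborel {0..2*pi} (\<lambda>x. g (x + s)) = set_lebesgue_integral lborel {0..2*pi} g"
    using Icc_Ico_integral(2)[OF gsm, of T] Icc_Ico_integral(2)[OF gm, of T] sh(2)
    unfolding gs T_def set_lebesgue_integral_def by simp
qed



lemma exp_k_periodic: "exp (- \<i> * of_int k * complex_of_real (y + 2*pi)) = exp (- \<i> * of_int k * complex_of_real y)"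
proof -
  have "exp (- \<i> * of_int k * complex_of_real (y + 2*pi)) = exp (- \<i> * of_int k * complex_of_real y) * exp ((2 * of_int (-k) * complex_of_real pi) * \<i>)"
    by (simp add: exp_add[symmetric] algebra_simps)
  also have "exp ((2 * of_int (-k) * complex_of_real pi) * \<i>) = 1"
    using exp_integer_2pi[of "real_of_int (-k)"] by simp
  finally show ?thesis by simp
qed

lemma measurable_shift:
  fixes g :: "real \<Rightarrow> 'a::{banach, second_countable_topology}"
  assumes gm: "g \<in> borel_measurable lborel"
  shows "(\<lambda>x. g (x + s)) \<in> borel_measurable lborel"
proof -
  have gmb: "g \<in> borel_measurable borel" using gm by simp
  have sm: "(\<lambda>x. x + s) \<in> borel_measurable lborel" by simp
  show ?thesis using measurable_compose[OF sm gmb] by simp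
qed

lemma in_L_parts:
  assumes "in_L f"
  shows "\<And>x. f (x + 2*pi) = f x" "set_integrable lborel {0..2*pi} f" "f \<in> borel_measurable lborel"
  using assms periodic_meas[of f] unfolding in_L_def by auto

lemma integrable_times_exp:
  assumes fL: "in_L f"
  shows "set_integrable lborel {0..2*pi} (\<lambda>x. f x * exp (- \<i> * of_int k * complex_of_real x))"
proof -
  note fp = in_L_parts[OF fL]
  have "(\<lambda>x. exp (- \<i> * of_int k * complex_of_real x)) \<in> borel_measurable borel"
    by (intro borel_measurable_continuous_onI continuous_intros)
  then have em: "(\<lambda>x. exp (- \<i> * of_int k * complex_of_real x)) \<in> borel_measurable lborel" by simp
  show ?thesis unfolding set_integrable_def
  proof (rule Bochner_Integration.integrable_bound[OF fp(2)[unfolded set_integrable_def]])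
    show "(\<lambda>x. indicator {0..2 * pi} x *\<^sub>R (f x * exp (- \<i> * of_int k * complex_of_real x))) \<in> borel_measurable lborel"
      using fp(3) em by measurable
    show "AE x in lborel. norm (indicator {0..2 * pi} x *\<^sub>R (f x * exp (- \<i> * of_int k * complex_of_real x)))
         \<le> norm (indicator {0..2 * pi} x *\<^sub>R f x)"
      by (intro AE_I2) (simp add: norm_mult indicator_def)
  qed
qed



lemma fourier_frac_diff:
  fixes f :: "real \<Rightarrow> complex" and \<alpha> h :: real and k :: int
  assumes fL: "in_L f" and a: "\<alpha> > 0"
  shows "fourier_coeff (frac_diff \<alpha> h f) k =
     (\<Sum>j. complex_of_real ((-1)^j * (\<alpha> gchoose j)) * exp (- (\<i> * of_int k * complex_of_real h))^j) * fourier_coeff f k"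
proof -
  note fp = in_L_parts[OF fL]
  define E where "E = exp (- (\<i> * of_int k * complex_of_real h))"
  define S where "S = {0..2*pi}"
  define c where "c j = complex_of_real ((-1)^j * (\<alpha> gchoose j))" for j
  define e where "e x = exp (- \<i> * of_int k * complex_of_real x)" for x
  define G where "G y = f y * e y" for y
  have Gper: "G (y + 2*pi) = G y" for y by (simp only: G_def e_def fp(1) exp_k_periodic)
  have Gint: "set_integrable lborel {0..2*pi} G" using integrable_times_exp[OF fL, of k] unfolding G_def e_def .
  have fnper: "norm (f (y + 2*pi)) = norm (f y)" for y using fp(1) by simp
  have fnint: "set_integrable lborel {0..2*pi} (\<lambda>y. norm (f y))" using set_integrable_norm[OF fp(2)] .
  have ne: "norm (e x) = 1" for x unfolding e_def by (simp add: norm_exp_eq_Re)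
  have nE: "cmod E = 1" unfolding E_def by (simp add: norm_exp_eq_Re)
  have eshift: "e x = E^j * e (x + (- real j * h))" for x j
  proof -
    have "E^j * e (x + (- real j * h)) = exp (of_nat j * (- (\<i> * of_int k * complex_of_real h)) + (- \<i> * of_int k * complex_of_real (x + (- real j * h))))"
      by (simp only: E_def e_def exp_of_nat_mult[symmetric] exp_add[symmetric])
    also have "of_nat j * (- (\<i> * of_int k * complex_of_real h)) + (- \<i> * of_int k * complex_of_real (x + (- real j * h))) = - \<i> * of_int k * complex_of_real x"
      by (simp add: algebra_simps)
    finally show ?thesis by (simp add: e_def)
  qed
  define F where "F j x = indicator S x *\<^sub>R (c j * f (x - real j * h) * e x)" for j x
  have Feq: "F j x = (c j * E^j) * (indicator S x *\<^sub>R G (x + (- real j * h)))" for j x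
    unfolding F_def G_def using eshift[of x j] by (simp add: indicator_def algebra_simps)
  have Fint: "integrable lborel (F j)" for j
  proof -
    have "integrable lborel (\<lambda>x. indicator S x *\<^sub>R G (x + (- real j * h)))"
      using shift_period(1)[OF Gper Gint, of "- real j * h"] unfolding set_integrable_def S_def .
    then have "integrable lborel (\<lambda>x. (c j * E^j) * (indicator S x *\<^sub>R G (x + (- real j * h))))"
      by (rule Bochner_Integration.integrable_mult_right)
    then show ?thesis unfolding Feq[abs_def] .
  qed
  have Fi: "integral\<^sup>L lborel (F j) = c j * E^j * set_lebesgue_integral lborel S G" for j
  proof -
    have "integral\<^sup>L lborel (F j) = (c j * E^j) * (\<integral>x. indicator S x *\<^sub>R G (x + (- real j * h)) \<partial>lborel)"
      unfolding Feq[abs_def] by (rule integral_mult_right_zero)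
    also have "(\<integral>x. indicator S x *\<^sub>R G (x + (- real j * h)) \<partial>lborel) = set_lebesgue_integral lborel S G"
      using shift_period(2)[OF Gper Gint, of "- real j * h"] unfolding set_lebesgue_integral_def S_def .
    finally show ?thesis .
  qed
  have Fn: "norm (F j x) = norm (c j) * (indicator S x *\<^sub>R norm (f (x + (- real j * h))))" for j x
    unfolding F_def by (simp add: norm_mult ne indicator_def)
  define I1 where "I1 = set_lebesgue_integral lborel S (\<lambda>y. norm (f y))"
  have Fni: "(\<integral>x. norm (F j x) \<partial>lborel) = norm (c j) * I1" for j
  proof -
    have "(\<integral>x. norm (F j x) \<partial>lborel) = norm (c j) * (\<integral>x. indicator S x *\<^sub>R norm (f (x + (- real j * h))) \<partial>lborel)"
      unfolding Fn by (rule integral_mult_right_zero)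
    also have "(\<integral>x. indicator S x *\<^sub>R norm (f (x + (- real j * h))) \<partial>lborel) = I1"
      using shift_period(2)[of "\<lambda>y. norm (f y)", OF fnper fnint, of "- real j * h"] unfolding set_lebesgue_integral_def S_def I1_def .
    finally show ?thesis .
  qed
  have nc: "norm (c j) = \<bar>\<alpha> gchoose j\<bar>" for j unfolding c_def norm_of_real by (simp add: abs_mult)
  have sumc: "summable (\<lambda>j. norm (c j))" unfolding nc by (rule coef_summable[OF a])
  have sumFni: "summable (\<lambda>j. (\<integral>x. norm (F j x) \<partial>lborel))"
    unfolding Fni by (rule summable_mult2[OF sumc])
  have Fm: "F j \<in> borel_measurable lborel" for j using Fint by (rule borel_measurable_integrable)
  have AEs: "AE x in lborel. summable (\<lambda>j. norm (F j x))"
  proof -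
    have "(\<integral>\<^sup>+x. (\<Sum>j. ennreal (norm (F j x))) \<partial>lborel) = (\<Sum>j. \<integral>\<^sup>+x. ennreal (norm (F j x)) \<partial>lborel)"
      by (rule nn_integral_suminf) (use Fm in measurable)
    also have "\<dots> = (\<Sum>j. ennreal (\<integral>x. norm (F j x) \<partial>lborel))"
      by (intro suminf_cong nn_integral_eq_integral integrable_norm Fint) auto
    also have "\<dots> = ennreal (\<Sum>j. (\<integral>x. norm (F j x) \<partial>lborel))"
      by (rule suminf_ennreal2[OF _ sumFni]) simp
    finally have fin: "(\<integral>\<^sup>+x. (\<Sum>j. ennreal (norm (F j x))) \<partial>lborel) \<noteq> \<infinity>" by simp
    have "AE x in lborel. (\<Sum>j. ennreal (norm (F j x))) \<noteq> \<infinity>"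
      by (rule nn_integral_PInf_AE[OF _ fin]) (use Fm in measurable)
    then show ?thesis
      by eventually_elim (rule summable_suminf_not_top, auto)
  qed
  have isum: "(\<integral>x. (\<Sum>j. F j x) \<partial>lborel) = (\<Sum>j. integral\<^sup>L lborel (F j))"
    by (rule integral_suminf[OF Fint AEs sumFni])
  have Sm: "(\<lambda>x. \<Sum>j. F j x) \<in> borel_measurable lborel"
    by (rule borel_measurable_integrable, rule integrable_suminf[OF Fint AEs sumFni])
  have fdm: "frac_diff \<alpha> h f \<in> borel_measurable lborel"
  proof -
    have "(\<lambda>x. c j * f (x + (- real j * h))) \<in> borel_measurable lborel" for j
      using measurable_shift[OF fp(3), of "- real j * h"] by measurable
    then have "(\<lambda>x. \<Sum>j. c j * f (x + (- real j * h))) \<in> borel_measurable lborel"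
      by (rule borel_measurable_suminf)
    then show ?thesis unfolding frac_diff_def c_def[symmetric] by simp
  qed
  have em: "e \<in> borel_measurable lborel"
  proof -
    have "e \<in> borel_measurable borel" unfolding e_def
      by (intro borel_measurable_continuous_onI continuous_intros)
    then show ?thesis by simp
  qed
  have Lm: "(\<lambda>x. indicator S x *\<^sub>R (frac_diff \<alpha> h f x * e x)) \<in> borel_measurable lborel"
    using fdm em unfolding S_def by measurable
  have AEeq: "AE x in lborel. indicator S x *\<^sub>R (frac_diff \<alpha> h f x * e x) = (\<Sum>j. F j x)"
    using AEs
  proof eventually_elim
    case (elim x)
    show ?case
    proof (cases "x \<in> S")
      case True
      have Fx: "F j x = (c j * f (x - real j * h)) * e x" for j unfolding F_def using True by simp
      have "norm (F j x) = norm (c j * f (x - real j * h))" for j unfolding Fx by (simp add: norm_mult ne)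
      then have "summable (\<lambda>j. norm (c j * f (x - real j * h)))" using elim by simp
      then have "summable (\<lambda>j. c j * f (x - real j * h))" by (rule summable_norm_cancel)
      then have "(\<Sum>j. F j x) = (\<Sum>j. c j * f (x - real j * h)) * e x" unfolding Fx by (rule suminf_mult2[symmetric])
      then show ?thesis using True unfolding frac_diff_def c_def by simp
    next
      case False
      then show ?thesis by (simp add: F_def)
    qed
  qed
  have sumcE: "summable (\<lambda>j. c j * E^j)"
    using multiplier_abs(1)[OF a nE] unfolding c_def by (rule summable_norm_cancel)
  have "set_lebesgue_integral lborel S (\<lambda>x. frac_diff \<alpha> h f x * e x) = (\<Sum>j. integral\<^sup>L lborel (F j))"
    unfolding set_lebesgue_integral_def isum[symmetric] by (rule integral_cong_AE[OF Lm Sm AEeq])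
  also have "\<dots> = (\<Sum>j. c j * E^j) * set_lebesgue_integral lborel S G"
    unfolding Fi by (rule suminf_mult2[symmetric, OF sumcE])
  finally have main: "set_lebesgue_integral lborel S (\<lambda>x. frac_diff \<alpha> h f x * e x) = (\<Sum>j. c j * E^j) * set_lebesgue_integral lborel S G" .
  show ?thesis
    unfolding fourier_coeff_def
    using main unfolding S_def e_def G_def c_def E_def by simp
qed



lemma orlicz_nonneg: "orlicz_fn M \<Longrightarrow> 0 \<le> u \<Longrightarrow> 0 \<le> M u"
  unfolding orlicz_fn_def by (metis atLeast_iff mono_onD order_refl)

lemma orlicz_mono: "orlicz_fn M \<Longrightarrow> 0 \<le> u \<Longrightarrow> u \<le> v \<Longrightarrow> M u \<le> M v"
  unfolding orlicz_fn_def by (metis atLeast_iff mono_onD order_trans)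

lemma orlicz_convex: "orlicz_fn M \<Longrightarrow> 0 \<le> u \<Longrightarrow> 0 \<le> v \<Longrightarrow> 0 \<le> t \<Longrightarrow> t \<le> 1 \<Longrightarrow>
    M ((1 - t) * u + t * v) \<le> (1 - t) * M u + t * M v"
  unfolding orlicz_fn_def using convex_onD[of "{0..}" M t u v] by auto

lemma orlicz_sub: "orlicz_fn M \<Longrightarrow> 0 \<le> u \<Longrightarrow> 0 \<le> t \<Longrightarrow> t \<le> 1 \<Longrightarrow> M (t * u) \<le> t * M u"
  using orlicz_convex[of M 0 u t] by (simp add: orlicz_fn_def)

lemma aux_frac: "(a::real) > 0 \<Longrightarrow> a / (a + b) * (x / a) = x / (a + b)"
proof -
  assume a: "a > 0"
  have "a / (a + b) * (x / a) = (a * x) / (a * (a + b))" by (simp add: mult.commute)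
  also have "\<dots> = x / (a + b)" using a by (rule nonzero_mult_divide_mult_cancel_left[OF less_imp_neq[symmetric]])
  finally show ?thesis .
qed

context
  fixes Ms :: "int \<Rightarrow> real \<Rightarrow> real"
  assumes orl: "\<forall>k. orlicz_fn (Ms k)"
begin

lemma lux_set_mono:
  assumes a: "a \<in> lux_set Ms d" and b: "b > 0" and le: "\<And>k. cmod (c k) / b \<le> cmod (d k) / a"
  shows "b \<in> lux_set Ms c"
proof -
  from a have a0: "a > 0" and s: "(\<lambda>k. Ms k (cmod (d k) / a)) summable_on UNIV"
    and i: "(\<Sum>\<^sub>\<infinity>k. Ms k (cmod (d k) / a)) \<le> 1" unfolding lux_set_def by auto
  have le2: "Ms k (cmod (c k) / b) \<le> Ms k (cmod (d k) / a)" for k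
    using orlicz_mono[OF orl[rule_format, of k] _ le[of k]] b by simp
  have nn: "0 \<le> Ms k (cmod (c k) / b)" for k using orlicz_nonneg[OF orl[rule_format, of k]] b by simp
  have s2: "(\<lambda>k. Ms k (cmod (c k) / b)) summable_on UNIV"
    by (rule summable_on_comparison_test[OF s]) (use le2 nn in auto)
  have "(\<Sum>\<^sub>\<infinity>k. Ms k (cmod (c k) / b)) \<le> (\<Sum>\<^sub>\<infinity>k. Ms k (cmod (d k) / a))"
    by (rule infsum_mono[OF s2 s le2])
  with i b s2 show ?thesis unfolding lux_set_def by auto
qed

lemma lux_set_add:
  assumes a: "a \<in> lux_set Ms c" and b: "b \<in> lux_set Ms d"
  shows "a + b \<in> lux_set Ms (\<lambda>k. c k + d k)"
proof -
  from a have a0: "a > 0" and sa: "(\<lambda>k. Ms k (cmod (c k) / a)) summable_on UNIV"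
    and ia: "(\<Sum>\<^sub>\<infinity>k. Ms k (cmod (c k) / a)) \<le> 1" unfolding lux_set_def by auto
  from b have b0: "b > 0" and sb: "(\<lambda>k. Ms k (cmod (d k) / b)) summable_on UNIV"
    and ib: "(\<Sum>\<^sub>\<infinity>k. Ms k (cmod (d k) / b)) \<le> 1" unfolding lux_set_def by auto
  define t where "t = b / (a + b)"
  have t01: "0 \<le> t" "t \<le> 1" "1 - t = a / (a + b)" using a0 b0 by (auto simp: t_def field_simps)
  have le: "Ms k (cmod (c k + d k) / (a + b)) \<le> (1 - t) * Ms k (cmod (c k) / a) + t * Ms k (cmod (d k) / b)" for k
  proof -
    have "cmod (c k + d k) / (a + b) \<le> (cmod (c k) + cmod (d k)) / (a + b)"
      using a0 b0 norm_triangle_ineq[of "c k" "d k"] by (simp add: divide_right_mono)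
    also have "\<dots> = (1 - t) * (cmod (c k) / a) + t * (cmod (d k) / b)"
    proof -
      have h1: "a / (a + b) * (cmod (c k) / a) = cmod (c k) / (a + b)" using aux_frac[OF a0] .
      have h2: "b / (a + b) * (cmod (d k) / b) = cmod (d k) / (a + b)" using aux_frac[OF b0, of a] by (simp add: add.commute)
      show ?thesis unfolding t01(3) unfolding t_def h1 h2 by (simp add: add_divide_distrib)
    qed
    finally have "Ms k (cmod (c k + d k) / (a + b)) \<le> Ms k ((1 - t) * (cmod (c k) / a) + t * (cmod (d k) / b))"
      using orlicz_mono[OF orl[rule_format, of k]] a0 b0 by simp
    also have "\<dots> \<le> (1 - t) * Ms k (cmod (c k) / a) + t * Ms k (cmod (d k) / b)"
      by (rule orlicz_convex[OF orl[rule_format, of k]]) (use a0 b0 t01 in auto)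
    finally show ?thesis .
  qed
  have nn: "0 \<le> Ms k (cmod (c k + d k) / (a + b))" for k using orlicz_nonneg[OF orl[rule_format, of k]] a0 b0 by simp
  have sab: "(\<lambda>k. (1 - t) * Ms k (cmod (c k) / a) + t * Ms k (cmod (d k) / b)) summable_on UNIV"
    by (intro summable_on_add summable_on_cmult_right sa sb)
  have s: "(\<lambda>k. Ms k (cmod (c k + d k) / (a + b))) summable_on UNIV"
    by (rule summable_on_comparison_test[OF sab]) (use le nn in auto)
  have "(\<Sum>\<^sub>\<infinity>k. Ms k (cmod (c k + d k) / (a + b))) \<le> (\<Sum>\<^sub>\<infinity>k. (1 - t) * Ms k (cmod (c k) / a) + t * Ms k (cmod (d k) / b))"
    by (rule infsum_mono[OF s sab le])
  also have "\<dots> = (1 - t) * (\<Sum>\<^sub>\<infinity>k. Ms k (cmod (c k) / a)) + t * (\<Sum>\<^sub>\<infinity>k. Ms k (cmod (d k) / b))"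
    by (simp add: infsum_add summable_on_cmult_right sa sb infsum_cmult_right)
  also have "\<dots> \<le> (1 - t) * 1 + t * 1"
    using ia ib t01 by (intro add_mono mult_left_mono) auto
  finally show ?thesis using s a0 b0 unfolding lux_set_def by auto
qed

lemma lux_set_finite:
  assumes fin: "finite K" and supp: "\<And>k. k \<notin> K \<Longrightarrow> c k = 0"
  shows "lux_set Ms c \<noteq> {}"
proof -
  define B where "B = (\<Sum>k\<in>K. cmod (c k) + cmod (c k) * Ms k 1) + 1"
  have nn1: "0 \<le> Ms k 1" for k using orlicz_nonneg[OF orl[rule_format, of k]] by simp
  have Bge: "cmod (c k) \<le> B - 1" if "k \<in> K" for k
  proof -
    have "cmod (c k) \<le> cmod (c k) + cmod (c k) * Ms k 1" using nn1[of k] by simp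
    also have "\<dots> \<le> (\<Sum>k\<in>K. cmod (c k) + cmod (c k) * Ms k 1)"
      by (rule member_le_sum[OF that _ fin]) (use nn1 in simp)
    finally show ?thesis unfolding B_def by simp
  qed
  have B1: "B \<ge> 1" unfolding B_def using nn1 by (simp add: sum_nonneg)
  have le: "Ms k (cmod (c k) / B) \<le> (cmod (c k) * Ms k 1) / B" if "k \<in> K" for k
  proof -
    have "cmod (c k) / B \<le> 1" using Bge[OF that] B1 by simp
    then show ?thesis using orlicz_sub[OF orl[rule_format, of k], of 1 "cmod (c k) / B"] B1 by simp
  qed
  have "(\<Sum>\<^sub>\<infinity>k. Ms k (cmod (c k) / B)) = (\<Sum>k\<in>K. Ms k (cmod (c k) / B))"
    by (subst infsum_cong_neutral[where T=K and g="\<lambda>k. Ms k (cmod (c k) / B)"])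
       (use supp orl fin in \<open>auto simp: orlicz_fn_def\<close>)
  also have "\<dots> \<le> (\<Sum>k\<in>K. (cmod (c k) * Ms k 1) / B)" by (rule sum_mono[OF le])
  also have "\<dots> = (\<Sum>k\<in>K. cmod (c k) * Ms k 1) / B" by (simp add: sum_divide_distrib)
  also have "\<dots> \<le> 1"
  proof -
    have "(\<Sum>k\<in>K. cmod (c k) * Ms k 1) \<le> B" unfolding B_def by (simp add: sum.distrib sum_nonneg)
    then show ?thesis using B1 by simp
  qed
  finally have i: "(\<Sum>\<^sub>\<infinity>k. Ms k (cmod (c k) / B)) \<le> 1" .
  define F where "F k = Ms k (cmod (c k) / B)" for k
  have "F summable_on K" using fin by simp
  moreover have "F summable_on K \<longleftrightarrow> F summable_on UNIV"
    by (rule summable_on_cong_neutral) (use supp orl in \<open>auto simp: orlicz_fn_def F_def\<close>)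
  ultimately have s: "(\<lambda>k. Ms k (cmod (c k) / B)) summable_on UNIV" unfolding F_def by simp
  show ?thesis using s i B1 unfolding lux_set_def by (intro ex_in_conv[THEN iffD1] exI[of _ B]) auto
qed

end



context
  fixes Ms :: "int \<Rightarrow> real \<Rightarrow> real"
  assumes orl: "\<forall>k. orlicz_fn (Ms k)"
begin

lemma lux_pos: "a \<in> lux_set Ms c \<Longrightarrow> a > 0" unfolding lux_set_def by auto

lemma lux_nonneg: "lux_set Ms c \<noteq> {} \<Longrightarrow> 0 \<le> lux_norm Ms c"
  unfolding lux_norm_def by (rule cInf_greatest) (auto dest: lux_pos intro: less_imp_le)

lemma lux_le: "a \<in> lux_set Ms c \<Longrightarrow> lux_norm Ms c \<le> a"
  unfolding lux_norm_def by (rule cInf_lower) (auto intro!: bdd_belowI[of _ 0] dest: lux_pos intro: less_imp_le)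

lemma lux_scale:
  assumes V: "lux_set Ms d \<noteq> {}" and r: "r \<ge> 0" and le: "\<And>k. cmod (c k) \<le> r * cmod (d k)"
  shows "lux_set Ms c \<noteq> {}" "lux_norm Ms c \<le> r * lux_norm Ms d"
proof -
  have mem: "r * a + e \<in> lux_set Ms c" if a: "a \<in> lux_set Ms d" and e: "e > 0" for a e
  proof -
    have a0: "a > 0" using lux_pos[OF a] .
    have b0: "r * a + e > 0" using a0 r e by (simp add: add_nonneg_pos)
    show ?thesis
    proof (rule lux_set_mono[OF orl a b0])
      fix k
      have "cmod (c k) * a \<le> r * cmod (d k) * a" using le[of k] a0 by (simp add: mult_right_mono)
      also have "\<dots> \<le> cmod (d k) * (r * a + e)" using e by (simp add: algebra_simps)
      finally show "cmod (c k) / (r * a + e) \<le> cmod (d k) / a"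
        using a0 b0 by (simp add: divide_simps)
    qed
  qed
  from V obtain a where a: "a \<in> lux_set Ms d" by blast
  show "lux_set Ms c \<noteq> {}" using mem[OF a, of 1] by auto
  have key: "lux_norm Ms c \<le> r * a" if a: "a \<in> lux_set Ms d" for a
  proof (rule field_le_epsilon)
    fix e :: real assume "e > 0"
    then show "lux_norm Ms c \<le> r * a + e" using lux_le[OF mem[OF a]] by simp
  qed
  show "lux_norm Ms c \<le> r * lux_norm Ms d"
  proof (cases "r = 0")
    case True then show ?thesis using key[OF a] by simp
  next
    case False
    then have r0: "r > 0" using r by simp
    have "lux_norm Ms c / r \<le> lux_norm Ms d" unfolding lux_norm_def[of Ms d]
      by (rule cInf_greatest[OF V]) (use key r0 in \<open>simp add: divide_simps mult.commute\<close>)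
    then show ?thesis using r0 by (simp add: divide_simps mult.commute)
  qed
qed

lemma lux_add:
  assumes Vc: "lux_set Ms c \<noteq> {}" and Vd: "lux_set Ms d \<noteq> {}"
  shows "lux_set Ms (\<lambda>k. c k + d k) \<noteq> {}" "lux_norm Ms (\<lambda>k. c k + d k) \<le> lux_norm Ms c + lux_norm Ms d"
proof -
  have le: "lux_norm Ms (\<lambda>k. c k + d k) \<le> a + b" if "a \<in> lux_set Ms c" "b \<in> lux_set Ms d" for a b
    using lux_le[OF lux_set_add[OF orl that]] .
  show "lux_set Ms (\<lambda>k. c k + d k) \<noteq> {}" using Vc Vd lux_set_add[OF orl] by blast
  have "lux_norm Ms (\<lambda>k. c k + d k) - b \<le> lux_norm Ms c" if b: "b \<in> lux_set Ms d" for b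
    unfolding lux_norm_def[of Ms c] by (rule cInf_greatest[OF Vc]) (use le b in force)
  then have "lux_norm Ms (\<lambda>k. c k + d k) - lux_norm Ms c \<le> lux_norm Ms d"
    unfolding lux_norm_def[of Ms d] by (intro cInf_greatest[OF Vd]) (force simp: lux_norm_def)
  then show "lux_norm Ms (\<lambda>k. c k + d k) \<le> lux_norm Ms c + lux_norm Ms d" by simp
qed

lemma conj_zero: "conj_fn (Ms k) 0 = 0" "bdd_above ((\<lambda>u. u * 0 - Ms k u) ` {0..})"
proof -
  have nn: "0 \<le> Ms k u" if "0 \<le> u" for u using orlicz_nonneg[OF orl[rule_format, of k] that] .
  have M0: "Ms k 0 = 0" using orl unfolding orlicz_fn_def by auto
  show "bdd_above ((\<lambda>u. u * 0 - Ms k u) ` {0..})" by (rule bdd_aboveI[of _ 0]) (auto intro: nn)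
  show "conj_fn (Ms k) 0 = 0" unfolding conj_fn_def
    by (rule cSup_eq_maximum) (auto simp: M0 image_iff intro: nn bexI[of _ 0])
qed

lemma zero_Lambda: "(\<lambda>k. 0) \<in> Lambda_set Ms"
  unfolding Lambda_set_def using conj_zero by (auto simp: infsum_0)

lemma young: "lam \<in> Lambda_set Ms \<Longrightarrow> 0 \<le> u \<Longrightarrow> u * lam k \<le> Ms k u + conj_fn (Ms k) (lam k)"
proof -
  assume lam: "lam \<in> Lambda_set Ms" and u: "0 \<le> u"
  have "u * lam k - Ms k u \<le> conj_fn (Ms k) (lam k)" unfolding conj_fn_def
    by (rule cSup_upper) (use lam u in \<open>auto simp: Lambda_set_def\<close>)
  then show ?thesis by simp
qed

lemma orl_bound:
  assumes a: "a \<in> lux_set Ms c" and lam: "lam \<in> Lambda_set Ms"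
  shows "(\<lambda>k. lam k * cmod (c k)) summable_on UNIV" "(\<Sum>\<^sub>\<infinity>k. lam k * cmod (c k)) \<le> 2 * a"
proof -
  from a have a0: "a > 0" and sa: "(\<lambda>k. Ms k (cmod (c k) / a)) summable_on UNIV"
    and ia: "(\<Sum>\<^sub>\<infinity>k. Ms k (cmod (c k) / a)) \<le> 1" unfolding lux_set_def by auto
  from lam have lam0: "\<And>k. lam k \<ge> 0" and sl: "(\<lambda>k. conj_fn (Ms k) (lam k)) summable_on UNIV"
    and il: "(\<Sum>\<^sub>\<infinity>k. conj_fn (Ms k) (lam k)) \<le> 1" unfolding Lambda_set_def by auto
  have le: "lam k * cmod (c k) \<le> a * (Ms k (cmod (c k) / a) + conj_fn (Ms k) (lam k))" for k
  proof -
    have "lam k * cmod (c k) = a * ((cmod (c k) / a) * lam k)" using a0 by simp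
    also have "\<dots> \<le> a * (Ms k (cmod (c k) / a) + conj_fn (Ms k) (lam k))"
      using young[OF lam, of "cmod (c k) / a" k] a0 by (intro mult_left_mono) auto
    finally show ?thesis .
  qed
  have s2: "(\<lambda>k. a * (Ms k (cmod (c k) / a) + conj_fn (Ms k) (lam k))) summable_on UNIV"
    by (intro summable_on_cmult_right summable_on_add sa sl)
  show s: "(\<lambda>k. lam k * cmod (c k)) summable_on UNIV"
    by (rule summable_on_comparison_test[OF s2]) (use le lam0 in auto)
  have "(\<Sum>\<^sub>\<infinity>k. lam k * cmod (c k)) \<le> (\<Sum>\<^sub>\<infinity>k. a * (Ms k (cmod (c k) / a) + conj_fn (Ms k) (lam k)))"
    by (rule infsum_mono[OF s s2 le])
  also have "\<dots> = a * ((\<Sum>\<^sub>\<infinity>k. Ms k (cmod (c k) / a)) + (\<Sum>\<^sub>\<infinity>k. conj_fn (Ms k) (lam k)))"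
    by (simp add: infsum_cmult_right summable_on_add sa sl infsum_add)
  also have "\<dots> \<le> a * (1 + 1)" using ia il a0 by (intro mult_left_mono add_mono) auto
  finally show "(\<Sum>\<^sub>\<infinity>k. lam k * cmod (c k)) \<le> 2 * a" by simp
qed

lemma orl_bdd:
  assumes V: "lux_set Ms c \<noteq> {}"
  shows "bdd_above ((\<lambda>lam. \<Sum>\<^sub>\<infinity>k. lam k * cmod (c k)) ` Lambda_set Ms)"
proof -
  from V obtain a where a: "a \<in> lux_set Ms c" by blast
  show ?thesis by (rule bdd_aboveI[of _ "2 * a"]) (use orl_bound(2)[OF a] in auto)
qed

lemma orl_upper: "lux_set Ms c \<noteq> {} \<Longrightarrow> lam \<in> Lambda_set Ms \<Longrightarrow> (\<Sum>\<^sub>\<infinity>k. lam k * cmod (c k)) \<le> orlicz_norm Ms c"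
  unfolding orlicz_norm_def by (rule cSup_upper) (auto intro: orl_bdd)

lemma orl_nonneg: "lux_set Ms c \<noteq> {} \<Longrightarrow> 0 \<le> orlicz_norm Ms c"
  using orl_upper[OF _ zero_Lambda, of c] by (simp add: infsum_0)

lemma orl_scale:
  assumes V: "lux_set Ms d \<noteq> {}" and r: "r \<ge> 0" and le: "\<And>k. cmod (c k) \<le> r * cmod (d k)"
  shows "orlicz_norm Ms c \<le> r * orlicz_norm Ms d"
proof -
  have Vc: "lux_set Ms c \<noteq> {}" using lux_scale(1)[OF V r le] .
  from Vc obtain a where a: "a \<in> lux_set Ms c" by blast
  from V obtain b where b: "b \<in> lux_set Ms d" by blast
  show ?thesis unfolding orlicz_norm_def[of Ms c]
  proof (rule cSup_least)
    show "(\<lambda>lam. \<Sum>\<^sub>\<infinity>k. lam k * cmod (c k)) ` Lambda_set Ms \<noteq> {}" using zero_Lambda by auto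
  next
    fix x assume "x \<in> (\<lambda>lam. \<Sum>\<^sub>\<infinity>k. lam k * cmod (c k)) ` Lambda_set Ms"
    then obtain lam where lam: "lam \<in> Lambda_set Ms" and x: "x = (\<Sum>\<^sub>\<infinity>k. lam k * cmod (c k))" by blast
    have lam0: "lam k \<ge> 0" for k using lam unfolding Lambda_set_def by auto
    have pt: "lam k * cmod (c k) \<le> r * (lam k * cmod (d k))" for k
      using mult_left_mono[OF le[of k] lam0[of k]] by (simp add: algebra_simps)
    have "x \<le> (\<Sum>\<^sub>\<infinity>k. r * (lam k * cmod (d k)))" unfolding x
      by (rule infsum_mono[OF orl_bound(1)[OF a lam] summable_on_cmult_right[OF orl_bound(1)[OF b lam]] pt])
    also have "\<dots> = r * (\<Sum>\<^sub>\<infinity>k. lam k * cmod (d k))" by (rule infsum_cmult_right) (use orl_bound(1)[OF b lam] in auto)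
    also have "\<dots> \<le> r * orlicz_norm Ms d" using orl_upper[OF V lam] r by (rule mult_left_mono)
    finally show "x \<le> r * orlicz_norm Ms d" .
  qed
qed

lemma orl_add:
  assumes Vc: "lux_set Ms c \<noteq> {}" and Vd: "lux_set Ms d \<noteq> {}"
  shows "orlicz_norm Ms (\<lambda>k. c k + d k) \<le> orlicz_norm Ms c + orlicz_norm Ms d"
proof -
  have Vcd: "lux_set Ms (\<lambda>k. c k + d k) \<noteq> {}" using lux_add(1)[OF Vc Vd] .
  from Vc obtain a where a: "a \<in> lux_set Ms c" by blast
  from Vd obtain b where b: "b \<in> lux_set Ms d" by blast
  from Vcd obtain ab where ab: "ab \<in> lux_set Ms (\<lambda>k. c k + d k)" by blast
  show ?thesis unfolding orlicz_norm_def[of Ms "\<lambda>k. c k + d k"]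
  proof (rule cSup_least)
    show "(\<lambda>lam. \<Sum>\<^sub>\<infinity>k. lam k * cmod (c k + d k)) ` Lambda_set Ms \<noteq> {}" using zero_Lambda by auto
  next
    fix x assume "x \<in> (\<lambda>lam. \<Sum>\<^sub>\<infinity>k. lam k * cmod (c k + d k)) ` Lambda_set Ms"
    then obtain lam where lam: "lam \<in> Lambda_set Ms" and x: "x = (\<Sum>\<^sub>\<infinity>k. lam k * cmod (c k + d k))" by blast
    have lam0: "lam k \<ge> 0" for k using lam unfolding Lambda_set_def by auto
    have "x \<le> (\<Sum>\<^sub>\<infinity>k. lam k * cmod (c k) + lam k * cmod (d k))" unfolding x
      by (rule infsum_mono[OF orl_bound(1)[OF ab lam] summable_on_add[OF orl_bound(1)[OF a lam] orl_bound(1)[OF b lam]]])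
         (use lam0 in \<open>auto simp: distrib_left[symmetric] intro: mult_left_mono norm_triangle_ineq\<close>)
    also have "\<dots> = (\<Sum>\<^sub>\<infinity>k. lam k * cmod (c k)) + (\<Sum>\<^sub>\<infinity>k. lam k * cmod (d k))"
      by (rule infsum_add[OF orl_bound(1)[OF a lam] orl_bound(1)[OF b lam]])
    also have "\<dots> \<le> orlicz_norm Ms c + orlicz_norm Ms d"
      using orl_upper[OF Vc lam] orl_upper[OF Vd lam] by (rule add_mono)
    finally show "x \<le> orlicz_norm Ms c + orlicz_norm Ms d" .
  qed
qed

end



context
  fixes Ms :: "int \<Rightarrow> real \<Rightarrow> real" and N :: "(int \<Rightarrow> complex) \<Rightarrow> real"
  assumes orl: "\<forall>k. orlicz_fn (Ms k)"
    and NN: "N = lux_norm Ms \<or> N = orlicz_norm Ms"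
begin

lemma N_nonneg: "lux_set Ms c \<noteq> {} \<Longrightarrow> 0 \<le> N c"
  using NN lux_nonneg[OF orl] orl_nonneg[OF orl] by auto

lemma N_scale:
  assumes "lux_set Ms d \<noteq> {}" "r \<ge> 0" "\<And>k. cmod (c k) \<le> r * cmod (d k)"
  shows "lux_set Ms c \<noteq> {}" "N c \<le> r * N d"
  using NN lux_scale[OF orl assms] orl_scale[OF orl assms] by auto

lemma N_add:
  assumes "lux_set Ms c \<noteq> {}" "lux_set Ms d \<noteq> {}"
  shows "lux_set Ms (\<lambda>k. c k + d k) \<noteq> {}" "N (\<lambda>k. c k + d k) \<le> N c + N d"
  using NN lux_add[OF orl assms] orl_add[OF orl assms] by auto

lemma N_sum_bound:
  assumes fin: "finite I" and V: "\<And>i. i \<in> I \<Longrightarrow> lux_set Ms (d i) \<noteq> {}"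
    and r: "\<And>i. i \<in> I \<Longrightarrow> r i \<ge> 0"
    and le: "\<And>k. cmod (c k) \<le> (\<Sum>i\<in>I. r i * cmod (d i k))"
  shows "lux_set Ms c \<noteq> {}" "N c \<le> (\<Sum>i\<in>I. r i * N (d i))"
proof -
  define D where "D J k = complex_of_real (\<Sum>i\<in>J. r i * cmod (d i k))" for J k
  have main: "lux_set Ms (D J) \<noteq> {} \<and> N (D J) \<le> (\<Sum>i\<in>J. r i * N (d i))" if "J \<subseteq> I" for J
    using finite_subset[OF that fin] that
  proof (induction J rule: finite_induct)
    case empty
    have D0: "D {} = (\<lambda>k. 0)" by (simp add: D_def fun_eq_iff)
    have V0: "lux_set Ms (\<lambda>k. 0) \<noteq> {}" by (rule lux_set_finite[OF orl, of "{}"]) auto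
    have "N (\<lambda>k. 0) \<le> 0 * N (\<lambda>k. 0)" by (rule N_scale(2)[OF V0]) auto
    then show ?case using V0 D0 by simp
  next
    case (insert i J)
    define T where "T k = complex_of_real (r i * cmod (d i k))" for k
    have ri: "r i \<ge> 0" and Vi: "lux_set Ms (d i) \<noteq> {}" using insert r V by auto
    have Tle: "cmod (T k) \<le> r i * cmod (d i k)" for k using ri unfolding T_def norm_of_real by simp
    note TS = N_scale[OF Vi ri Tle]
    have IH: "lux_set Ms (D J) \<noteq> {}" "N (D J) \<le> (\<Sum>i\<in>J. r i * N (d i))" using insert by auto
    have Deq: "D (insert i J) = (\<lambda>k. T k + D J k)"
      using insert by (simp add: D_def T_def fun_eq_iff)
    note AS = N_add[OF TS(1) IH(1)]
    show ?case unfolding Deq using AS TS(2) IH(2) insert by simp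
  qed
  note M = main[OF order_refl]
  have Dn: "cmod (D I k) = (\<Sum>i\<in>I. r i * cmod (d i k))" for k
  proof -
    have "0 \<le> (\<Sum>i\<in>I. r i * cmod (d i k))" using r by (simp add: sum_nonneg)
    then show ?thesis unfolding D_def norm_of_real by simp
  qed
  have le1: "cmod (c k) \<le> 1 * cmod (D I k)" for k using le[of k] Dn[of k] by simp
  note S = N_scale[OF conjunct1[OF M] _ le1]
  show "lux_set Ms c \<noteq> {}" using S(1) by simp
  show "N c \<le> (\<Sum>i\<in>I. r i * N (d i))" using S(2) conjunct2[OF M] by simp
qed

end



lemma exp_int_has_integral:
  fixes n :: int assumes n: "n \<noteq> 0"
  shows "((\<lambda>x. exp (\<i> * of_int n * complex_of_real x)) has_integral 0) {0..2*pi}"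
proof -
  define F where "F x = exp (\<i> * of_int n * complex_of_real x) / (\<i> * of_int n)" for x
  have d: "((\<lambda>z. exp (\<i> * of_int n * z) / (\<i> * of_int n)) has_field_derivative exp (\<i> * of_int n * z)) (at z)" for z :: complex
    using n by (auto intro!: derivative_eq_intros simp: field_simps)
  have "(F has_vector_derivative exp (\<i> * of_int n * complex_of_real x)) (at x within {0..2*pi})" for x
    unfolding F_def by (rule has_vector_derivative_real_field[OF d])
  from fundamental_theorem_of_calculus[of 0 "2*pi" F, OF _ this]
  have "((\<lambda>x. exp (\<i> * of_int n * complex_of_real x)) has_integral (F (2*pi) - F 0)) {0..2*pi}" by simp
  moreover have "exp (\<i> * of_int n * complex_of_real (2*pi)) = 1"
    using exp_integer_2pi[of "real_of_int n"] by (simp add: mult_ac)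
  ultimately show ?thesis by (simp add: F_def)
qed

lemma trig_integrand:
  "(\<lambda>x. (\<Sum>l\<in>{-m..m}. c l * exp (\<i> * of_int l * complex_of_real x)) * exp (- \<i> * of_int k * complex_of_real x))
   = (\<lambda>x. \<Sum>l\<in>{-m..m}. c l * exp (\<i> * of_int (l - k) * complex_of_real x))"
proof
  fix x
  have "exp (\<i> * of_int l * complex_of_real x) * exp (- \<i> * of_int k * complex_of_real x) = exp (\<i> * of_int (l - k) * complex_of_real x)" for l
    by (simp add: exp_add[symmetric] algebra_simps)
  then show "(\<Sum>l\<in>{-m..m}. c l * exp (\<i> * of_int l * complex_of_real x)) * exp (- \<i> * of_int k * complex_of_real x)
     = (\<Sum>l\<in>{-m..m}. c l * exp (\<i> * of_int (l - k) * complex_of_real x))"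
    by (simp add: sum_distrib_right mult.assoc)
qed

lemma trig_integrable:
  assumes "t \<in> trig_polys m"
  shows "set_integrable lborel {0..2*pi} (\<lambda>x. t x * exp (- \<i> * of_int k * complex_of_real x))"
proof -
  from assms obtain c where t: "t = (\<lambda>x. \<Sum>l\<in>{-m..m}. c l * exp (\<i> * of_int l * complex_of_real x))"
    unfolding trig_polys_def by blast
  show ?thesis unfolding t
    by (rule borel_integrable_atLeastAtMost') (intro continuous_intros)
qed

lemma trig_coeff_zero:
  assumes "t \<in> trig_polys m" and k: "k \<notin> {-m..m}"
  shows "fourier_coeff t k = 0"
proof -
  from assms obtain c where t: "t = (\<lambda>x. \<Sum>l\<in>{-m..m}. c l * exp (\<i> * of_int l * complex_of_real x))"
    unfolding trig_polys_def by blast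
  have hi: "((\<lambda>x. \<Sum>l\<in>{-m..m}. c l * exp (\<i> * of_int (l - k) * complex_of_real x)) has_integral (\<Sum>l\<in>{-m..m}. c l * 0)) {0..2*pi}"
  proof (rule has_integral_sum)
    fix l assume "l \<in> {-m..m}"
    then have "l - k \<noteq> 0" using k by auto
    then show "((\<lambda>x. c l * exp (\<i> * of_int (l - k) * complex_of_real x)) has_integral c l * 0) {0..2*pi}"
      by (intro has_integral_mult_right exp_int_has_integral)
  qed simp
  have "set_lebesgue_integral lborel {0..2*pi} (\<lambda>x. t x * exp (- \<i> * of_int k * complex_of_real x))
      = integral {0..2*pi} (\<lambda>x. t x * exp (- \<i> * of_int k * complex_of_real x))"
    by (rule set_borel_integral_eq_integral(2)[OF trig_integrable[OF assms(1)]])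
  also have "\<dots> = 0" unfolding t trig_integrand using hi by (simp add: integral_unique)
  finally show ?thesis unfolding fourier_coeff_def by simp
qed

lemma fc_diff:
  assumes fL: "in_L f" and t: "t \<in> trig_polys m"
  shows "fourier_coeff (\<lambda>x. f x - t x) k = fourier_coeff f k - fourier_coeff t k"
proof -
  have "set_lebesgue_integral lborel {0..2*pi} (\<lambda>x. (f x - t x) * exp (- \<i> * of_int k * complex_of_real x))
     = set_lebesgue_integral lborel {0..2*pi} (\<lambda>x. f x * exp (- \<i> * of_int k * complex_of_real x) - t x * exp (- \<i> * of_int k * complex_of_real x))"
    by (simp add: algebra_simps)
  also have "\<dots> = set_lebesgue_integral lborel {0..2*pi} (\<lambda>x. f x * exp (- \<i> * of_int k * complex_of_real x))
       - set_lebesgue_integral lborel {0..2*pi} (\<lambda>x. t x * exp (- \<i> * of_int k * complex_of_real x))"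
    by (rule set_integral_diff(2)[OF integrable_times_exp[OF fL] trig_integrable[OF t]])
  finally show ?thesis unfolding fourier_coeff_def by (simp add: diff_divide_distrib)
qed

lemma zero_trig: "(\<lambda>x. 0) \<in> trig_polys m"
  unfolding trig_polys_def by (auto intro!: exI[of _ "\<lambda>_. 0"])

definition tail :: "(real \<Rightarrow> complex) \<Rightarrow> nat \<Rightarrow> int \<Rightarrow> complex" where
  "tail f n k = (if \<bar>k\<bar> \<ge> int n then fourier_coeff f k else 0)"

context
  fixes Ms :: "int \<Rightarrow> real \<Rightarrow> real" and N :: "(int \<Rightarrow> complex) \<Rightarrow> real" and f :: "real \<Rightarrow> complex"
  assumes orl: "\<forall>k. orlicz_fn (Ms k)"
    and NN: "N = lux_norm Ms \<or> N = orlicz_norm Ms"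
    and SM: "in_SM Ms f"
begin

lemma fL: "in_L f" using SM unfolding in_SM_def by auto
lemma Vf: "lux_set Ms (fourier_coeff f) \<noteq> {}" using SM unfolding in_SM_def by auto


lemma tail_V: "lux_set Ms (tail f n) \<noteq> {}"
  by (rule N_scale(1)[OF orl NN Vf, of 1]) (auto simp: tail_def)

lemma diff_V_le:
  assumes t: "t \<in> trig_polys (int n - 1)"
  shows "lux_set Ms (fourier_coeff (\<lambda>x. f x - t x)) \<noteq> {}" "N (tail f n) \<le> N (fourier_coeff (\<lambda>x. f x - t x))"
proof -
  have supp: "fourier_coeff t k = 0" if "k \<notin> {-(int n - 1)..int n - 1}" for k
    using trig_coeff_zero[OF t that] .
  have Vt: "lux_set Ms (fourier_coeff t) \<noteq> {}"
    by (rule lux_set_finite[OF orl, of "{-(int n - 1)..int n - 1}"]) (use supp in auto)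
  have Vmt: "lux_set Ms (\<lambda>k. - fourier_coeff t k) \<noteq> {}"
    by (rule N_scale(1)[OF orl NN Vt, of 1]) auto
  have eq: "fourier_coeff (\<lambda>x. f x - t x) = (\<lambda>k. fourier_coeff f k + - fourier_coeff t k)"
    using fc_diff[OF fL t] by (simp add: fun_eq_iff)
  show V: "lux_set Ms (fourier_coeff (\<lambda>x. f x - t x)) \<noteq> {}"
    unfolding eq by (rule N_add(1)[OF orl NN Vf Vmt])
  show "N (tail f n) \<le> N (fourier_coeff (\<lambda>x. f x - t x))"
  proof -
    have "cmod (tail f n k) \<le> 1 * cmod (fourier_coeff (\<lambda>x. f x - t x) k)" for k
    proof (cases "\<bar>k\<bar> \<ge> int n")
      case True
      then have "k \<notin> {-(int n - 1)..int n - 1}" by auto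
      then show ?thesis using supp[of k] True by (simp add: tail_def eq)
    qed (simp add: tail_def)
    from N_scale(2)[OF orl NN V _ this] show ?thesis by simp
  qed
qed

lemma tail_le_E: "N (tail f n) \<le> best_approx N f n"
  unfolding best_approx_def fnorm_def
  by (rule cInf_greatest) (use zero_trig diff_V_le(2) in auto)

lemma E_le_N: "best_approx N f n \<le> N (fourier_coeff f)"
proof -
  have "best_approx N f n \<le> fnorm N (\<lambda>x. f x - 0)"
    unfolding best_approx_def
  proof (rule cInf_lower)
    show "fnorm N (\<lambda>x. f x - 0) \<in> (\<lambda>t. fnorm N (\<lambda>x. f x - t x)) ` trig_polys (int n - 1)"
      by (rule image_eqI[where x="\<lambda>x. 0"]) (simp_all add: zero_trig)
    show "bdd_below ((\<lambda>t. fnorm N (\<lambda>x. f x - t x)) ` trig_polys (int n - 1))"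
      by (rule bdd_belowI[of _ 0]) (auto simp: fnorm_def intro!: N_nonneg[OF orl NN] diff_V_le(1))
  qed
  then show ?thesis by (simp add: fnorm_def)
qed

end



lemma dyadic_block:
  fixes K :: int
  assumes "1 \<le> K" "K < 2^n"
  shows "\<exists>m<n. 2^m \<le> K \<and> K < 2^(m+1)"
  using assms
proof (induction n)
  case 0 then show ?case by simp
next
  case (Suc n)
  show ?case
  proof (cases "K < 2^n")
    case True then show ?thesis using Suc by (metis less_SucI)
  next
    case False then show ?thesis using Suc.prems by (intro exI[of _ n]) auto
  qed
qed

lemma multiplier_bound:
  fixes \<alpha> h :: real and k :: int
  assumes a: "\<alpha> > 0"
  defines "E \<equiv> exp (- (\<i> * of_int k * complex_of_real h))"
  shows "cmod (\<Sum>j. complex_of_real ((-1)^j * (\<alpha> gchoose j)) * E^j) \<le> 2 powr \<alpha>"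
    and "cmod (\<Sum>j. complex_of_real ((-1)^j * (\<alpha> gchoose j)) * E^j) \<le> (\<bar>real_of_int k\<bar> * \<bar>h\<bar>) powr \<alpha>"
    and "k = 0 \<Longrightarrow> (\<Sum>j. complex_of_real ((-1)^j * (\<alpha> gchoose j)) * E^j) = 0"
proof -
  have E: "E = exp (\<i> * complex_of_real (- (real_of_int k * h)))" unfolding E_def by (simp add: mult.assoc)
  have nE: "cmod E = 1" unfolding E by (simp add: norm_exp_eq_Re)
  note M = multiplier_abs(2)[OF a nE]
  show "cmod (\<Sum>j. complex_of_real ((-1)^j * (\<alpha> gchoose j)) * E^j) \<le> 2 powr \<alpha>"
    unfolding M unfolding E using cmod_1_minus_cis_le(2)[of "- (real_of_int k * h)"] a by (intro powr_mono2) auto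
  show "cmod (\<Sum>j. complex_of_real ((-1)^j * (\<alpha> gchoose j)) * E^j) \<le> (\<bar>real_of_int k\<bar> * \<bar>h\<bar>) powr \<alpha>"
    unfolding M unfolding E using cmod_1_minus_cis_le(1)[of "- (real_of_int k * h)"] a by (intro powr_mono2) (auto simp: abs_mult)
  assume k0: "k = 0"
  have "cmod (\<Sum>j. complex_of_real ((-1)^j * (\<alpha> gchoose j)) * E^j) = 0" unfolding M unfolding E using k0 a by simp
  then show "(\<Sum>j. complex_of_real ((-1)^j * (\<alpha> gchoose j)) * E^j) = 0" by (rule iffD1[OF norm_eq_zero])
qed

context
  fixes Ms :: "int \<Rightarrow> real \<Rightarrow> real" and N :: "(int \<Rightarrow> complex) \<Rightarrow> real" and f :: "real \<Rightarrow> complex"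
  assumes orl: "\<forall>k. orlicz_fn (Ms k)"
    and NN: "N = lux_norm Ms \<or> N = orlicz_norm Ms"
    and SM: "in_SM Ms f"
begin

lemma mod_term:
  fixes \<alpha> h t :: real and n :: nat
  assumes a: "\<alpha> > 0" and ht: "\<bar>h\<bar> \<le> t"
  shows "lux_set Ms (fourier_coeff (frac_diff \<alpha> h f)) \<noteq> {}"
    "N (fourier_coeff (frac_diff \<alpha> h f)) \<le>
       2 powr \<alpha> * best_approx N f (2^n) + (\<Sum>m<n. (2^(m+1) * t) powr \<alpha> * best_approx N f (2^m))"
proof -
  define r where "r i = (if i = n then 2 powr \<alpha> else (2^(i+1) * t) powr \<alpha>)" for i :: nat
  define d where "d i = tail f (2^i)" for i :: nat
  have Vd: "lux_set Ms (d i) \<noteq> {}" for i unfolding d_def by (rule tail_V[OF orl NN SM])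
  have r0: "r i \<ge> 0" for i by (simp add: r_def)
  have nn: "0 \<le> r i * cmod (d i k)" for i k using r0[of i] by simp
  have le: "cmod (fourier_coeff (frac_diff \<alpha> h f) k) \<le> (\<Sum>i\<in>{..n}. r i * cmod (d i k))" for k
  proof -
    define E where "E = exp (- (\<i> * of_int k * complex_of_real h))"
    define mu where "mu = (\<Sum>j. complex_of_real ((-1)^j * (\<alpha> gchoose j)) * E^j)"
    have fc: "fourier_coeff (frac_diff \<alpha> h f) k = mu * fourier_coeff f k"
      unfolding mu_def E_def by (rule fourier_frac_diff[OF fL[OF orl NN SM] a])
    note MB = multiplier_bound[OF a, of k h, folded E_def, folded mu_def]
    have single: "r i * cmod (d i k) \<le> (\<Sum>i\<in>{..n}. r i * cmod (d i k))" if "i \<le> n" for i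
      by (rule member_le_sum) (use that nn in auto)
    consider "k = 0" | "\<bar>k\<bar> \<ge> 2^n" | "1 \<le> \<bar>k\<bar>" "\<bar>k\<bar> < 2^n" by linarith
    then show ?thesis
    proof cases
      case 1
      then show ?thesis using MB(3) fc by (simp add: sum_nonneg nn)
    next
      case 2
      have "cmod (fourier_coeff (frac_diff \<alpha> h f) k) \<le> 2 powr \<alpha> * cmod (fourier_coeff f k)"
        unfolding fc norm_mult using MB(1) by (rule mult_right_mono) simp
      also have "\<dots> = r n * cmod (d n k)" using 2 by (simp add: r_def d_def tail_def)
      also have "\<dots> \<le> (\<Sum>i\<in>{..n}. r i * cmod (d i k))" by (rule single) simp
      finally show ?thesis .
    next
      case 3
      then obtain m where m: "m < n" "2^m \<le> \<bar>k\<bar>" "\<bar>k\<bar> < 2^(m+1)" using dyadic_block by blast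
      have "\<bar>real_of_int k\<bar> * \<bar>h\<bar> \<le> 2^(m+1) * t"
      proof -
        have "\<bar>real_of_int k\<bar> \<le> 2^(m+1)" using m(3) by (metis of_int_abs of_int_le_iff of_int_numeral of_int_power less_imp_le)
        then show ?thesis using ht by (intro mult_mono) auto
      qed
      then have "cmod mu \<le> (2^(m+1) * t) powr \<alpha>"
        using MB(2) a by (meson order_trans powr_mono2 less_imp_le abs_ge_zero mult_nonneg_nonneg)
      then have "cmod (fourier_coeff (frac_diff \<alpha> h f) k) \<le> (2^(m+1) * t) powr \<alpha> * cmod (fourier_coeff f k)"
        unfolding fc norm_mult by (rule mult_right_mono) simp
      also have "\<dots> = r m * cmod (d m k)"
      proof -
        have "\<bar>k\<bar> \<ge> int (2^m)" using m(2) by simp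
        then show ?thesis using m(1) by (simp add: r_def d_def tail_def)
      qed
      also have "\<dots> \<le> (\<Sum>i\<in>{..n}. r i * cmod (d i k))" by (rule single) (use m in simp)
      finally show ?thesis .
    qed
  qed
  note S = N_sum_bound[OF orl NN finite_atMost Vd r0 le]
  show "lux_set Ms (fourier_coeff (frac_diff \<alpha> h f)) \<noteq> {}" using S(1) .
  have "(\<Sum>i\<in>{..n}. r i * N (d i)) \<le> 2 powr \<alpha> * best_approx N f (2^n) + (\<Sum>m<n. (2^(m+1) * t) powr \<alpha> * best_approx N f (2^m))"
  proof -
    have "(\<Sum>i\<in>{..n}. r i * N (d i)) = r n * N (d n) + (\<Sum>i<n. r i * N (d i))"
      by (simp add: lessThan_Suc_atMost[symmetric])
    also have "\<dots> \<le> 2 powr \<alpha> * best_approx N f (2^n) + (\<Sum>m<n. (2^(m+1) * t) powr \<alpha> * best_approx N f (2^m))"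
    proof (intro add_mono sum_mono)
      show "r n * N (d n) \<le> 2 powr \<alpha> * best_approx N f (2^n)"
        unfolding r_def d_def by (simp add: mult_left_mono tail_le_E[OF orl NN SM])
      fix i assume "i \<in> {..<n}"
      then show "r i * N (d i) \<le> (2^(i+1) * t) powr \<alpha> * best_approx N f (2^i)"
        unfolding r_def d_def by (simp add: mult_left_mono tail_le_E[OF orl NN SM])
    qed
    finally show ?thesis .
  qed
  then show "N (fourier_coeff (frac_diff \<alpha> h f)) \<le>
       2 powr \<alpha> * best_approx N f (2^n) + (\<Sum>m<n. (2^(m+1) * t) powr \<alpha> * best_approx N f (2^m))"
    using S(2) by linarith
qed

lemma modulus_bound:
  fixes \<alpha> t :: real and n :: nat
  assumes a: "\<alpha> > 0" and t: "t \<ge> 0"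
  shows "0 \<le> modulus N \<alpha> f t"
    "modulus N \<alpha> f t \<le> 2 powr \<alpha> * best_approx N f (2^n) + (\<Sum>m<n. (2^(m+1) * t) powr \<alpha> * best_approx N f (2^m))"
proof -
  let ?B = "2 powr \<alpha> * best_approx N f (2^n) + (\<Sum>m<n. (2^(m+1) * t) powr \<alpha> * best_approx N f (2^m))"
  let ?S = "(\<lambda>h. fnorm N (frac_diff \<alpha> h f)) ` {h. \<bar>h\<bar> \<le> t}"
  have "0 \<in> {h. \<bar>h\<bar> \<le> t}" using t by simp
  then have ne: "?S \<noteq> {}" by blast
  have ub: "x \<le> ?B" if "x \<in> ?S" for x using that mod_term(2)[OF a, of _ t n] by (auto simp: fnorm_def)
  show "modulus N \<alpha> f t \<le> ?B" unfolding modulus_def by (rule cSup_least[OF ne ub])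
  have "fnorm N (frac_diff \<alpha> 0 f) \<le> Sup ?S"
    by (rule cSup_upper) (use t ub in \<open>auto intro!: bdd_aboveI\<close>)
  moreover have "0 \<le> fnorm N (frac_diff \<alpha> 0 f)" unfolding fnorm_def
    by (rule N_nonneg[OF orl NN mod_term(1)[OF a, of 0 0]]) simp
  ultimately show "0 \<le> modulus N \<alpha> f t" unfolding modulus_def by linarith
qed

end



lemma pow2_powr: "((2::real)^m) powr d = (2 powr d)^m"
proof -
  have "(2::real)^m = 2 powr (real m)" by (simp add: powr_realpow)
  then have "((2::real)^m) powr d = 2 powr (real m * d)" by (simp add: powr_powr)
  also have "\<dots> = (2 powr d)^m" by (simp add: powr_power)
  finally show ?thesis .
qed

lemma dyadic_n:
  fixes t :: real assumes t: "0 < t" "t < 1"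
  shows "\<exists>n\<ge>1. 1 \<le> 2^n * t \<and> 2^n * t < 2"
proof -
  define P where "P n = (1 \<le> (2::real)^n * t)" for n
  obtain n0 where "1 / t < 2^n0" using real_arch_pow[of 2 "1/t"] by auto
  then have "P n0" using t by (simp add: P_def field_simps)
  define n where "n = (LEAST n. P n)"
  have Pn: "P n" unfolding n_def by (rule LeastI[of P n0, OF \<open>P n0\<close>])
  have n0': "n \<noteq> 0" using Pn t by (cases n) (auto simp: P_def)
  then obtain p where p: "n = Suc p" by (cases n) auto
  have "\<not> P p" using not_less_Least[of p P] p unfolding n_def by auto
  then have "2^n * t < 2" unfolding P_def p by simp
  then show ?thesis using Pn n0' unfolding P_def by (intro exI[of _ n]) auto
qed

lemma G_lt:
  fixes \<alpha> \<beta> t :: real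
  assumes ab: "\<beta> < \<alpha>" and t: "0 < t" and n: "2^n * t < 2"
  defines "q \<equiv> 2 powr (\<alpha> - \<beta>)"
  shows "t powr \<beta> + t powr \<alpha> * (\<Sum>m<n. q^m) \<le> (1 + 2 powr (\<alpha> - \<beta>) / (q - 1)) * t powr \<beta>"
proof -
  have q1: "q > 1" unfolding q_def using powr_less_mono[of 0 "\<alpha> - \<beta>" 2] ab by simp
  have "(\<Sum>m<n. q^m) = (q^n - 1) / (q - 1)"
    using q1 by (simp add: sum_gp_strict field_simps)
  also have "\<dots> \<le> q^n / (q - 1)" using q1 by (simp add: divide_right_mono)
  finally have S: "(\<Sum>m<n. q^m) \<le> q^n / (q - 1)" .
  have "q^n = ((2::real)^n) powr (\<alpha> - \<beta>)" unfolding q_def by (simp add: pow2_powr)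
  also have "\<dots> \<le> (2 / t) powr (\<alpha> - \<beta>)"
    using n t ab by (intro powr_mono2) (auto simp: field_simps)
  also have "\<dots> = 2 powr (\<alpha> - \<beta>) / t powr (\<alpha> - \<beta>)" using t by (simp add: powr_divide)
  finally have qn: "q^n \<le> 2 powr (\<alpha> - \<beta>) / t powr (\<alpha> - \<beta>)" .
  have tt: "t powr \<alpha> / t powr (\<alpha> - \<beta>) = t powr \<beta>" using t by (simp add: powr_diff)
  have "t powr \<alpha> * (\<Sum>m<n. q^m) \<le> t powr \<alpha> * (q^n / (q - 1))" using mult_left_mono[OF S, of "t powr \<alpha>"] by simp
  also have "\<dots> \<le> t powr \<alpha> * ((2 powr (\<alpha> - \<beta>) / t powr (\<alpha> - \<beta>)) / (q - 1))"
    using qn q1 by (intro mult_left_mono divide_right_mono) auto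
  also have "\<dots> = 2 powr (\<alpha> - \<beta>) / (q - 1) * (t powr \<alpha> / t powr (\<alpha> - \<beta>))" by (simp add: field_simps)
  also have "\<dots> = 2 powr (\<alpha> - \<beta>) / (q - 1) * t powr \<beta>" unfolding tt ..
  finally show ?thesis by (simp add: algebra_simps)
qed

lemma G_gt:
  fixes \<alpha> \<beta> t :: real
  assumes ab: "\<alpha> < \<beta>" and t: "0 < t" "t < 1"
  defines "q \<equiv> 2 powr (\<alpha> - \<beta>)"
  shows "t powr \<beta> + t powr \<alpha> * (\<Sum>m<n. q^m) \<le> (1 + 1 / (1 - q)) * t powr \<alpha>"
proof -
  have q1: "q < 1" unfolding q_def using powr_less_mono[of "\<alpha> - \<beta>" 0 2] ab by simp
  have q0: "q > 0" unfolding q_def by simp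
  have "(\<Sum>m<n. q^m) = (1 - q^n) / (1 - q)" using q1 by (simp add: sum_gp_strict)
  also have "\<dots> \<le> 1 / (1 - q)" using q1 q0 by (simp add: divide_right_mono)
  finally have S: "(\<Sum>m<n. q^m) \<le> 1 / (1 - q)" .
  have tb: "t powr \<beta> \<le> t powr \<alpha>" using ab t by (intro powr_mono') auto
  have "t powr \<alpha> * (\<Sum>m<n. q^m) \<le> t powr \<alpha> * (1 / (1 - q))" using mult_left_mono[OF S, of "t powr \<alpha>"] by simp
  then show ?thesis using tb by (simp add: algebra_simps)
qed

lemma G_eq:
  fixes \<alpha> t :: real
  assumes t: "0 < t" "t \<le> exp (-1)" and n: "2^n * t < 2" "n \<ge> 1"
  shows "t powr \<alpha> + t powr \<alpha> * (\<Sum>m<n. (2 powr (\<alpha> - \<alpha>))^m) \<le> (2 + 1 / ln 2) * (t powr \<alpha> * \<bar>ln t\<bar>)"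
proof -
  have lt: "ln t \<le> -1" using t by (metis ln_exp ln_le_cancel_iff exp_gt_zero)
  obtain p where p: "n = Suc p" using n(2) by (cases n) auto
  have "2^p * t < 1" using n(1) unfolding p by simp
  then have "ln (2^p * t) < 0" using t by (simp add: ln_less_zero)
  then have "real p * ln 2 + ln t < 0" using t by (simp add: ln_mult ln_realpow)
  then have "real p < - ln t / ln 2" by (simp add: field_simps)
  then have "real n \<le> 1 + - ln t / ln 2" unfolding p by simp
  also have "\<dots> \<le> - ln t + - ln t / ln 2" using lt by simp
  also have "\<dots> = (1 + 1 / ln 2) * (- ln t)" by (simp add: distrib_right)
  finally have nb: "real n \<le> (1 + 1 / ln 2) * \<bar>ln t\<bar>" using lt by simp
  have S: "(\<Sum>m<n. (2 powr (\<alpha> - \<alpha>))^m) = real n" by simp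
  have "t powr \<alpha> + t powr \<alpha> * real n \<le> t powr \<alpha> * \<bar>ln t\<bar> + t powr \<alpha> * ((1 + 1 / ln 2) * \<bar>ln t\<bar>)"
  proof (rule add_mono)
    have "t powr \<alpha> * 1 \<le> t powr \<alpha> * \<bar>ln t\<bar>" using lt by (intro mult_left_mono) auto
    then show "t powr \<alpha> \<le> t powr \<alpha> * \<bar>ln t\<bar>" by simp
    show "t powr \<alpha> * real n \<le> t powr \<alpha> * ((1 + 1 / ln 2) * \<bar>ln t\<bar>)" using nb by (intro mult_left_mono) auto
  qed
  also have "\<dots> = (2 + 1 / ln 2) * (t powr \<alpha> * \<bar>ln t\<bar>)" by (simp add: algebra_simps)
  finally show ?thesis unfolding S .
qed



context
  fixes Ms :: "int \<Rightarrow> real \<Rightarrow> real" and N :: "(int \<Rightarrow> complex) \<Rightarrow> real" and f :: "real \<Rightarrow> complex"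
  assumes orl: "\<forall>k. orlicz_fn (Ms k)"
    and NN: "N = lux_norm Ms \<or> N = orlicz_norm Ms"
    and SM: "in_SM Ms f"
begin

lemma E_bound:
  fixes \<beta> :: real
  assumes O: "(\<lambda>n. best_approx N f n) \<in> O(\<lambda>n. real n powr (- \<beta>))" and b: "\<beta> > 0"
  shows "\<exists>K>0. \<forall>j\<ge>1. best_approx N f j \<le> K * real j powr (- \<beta>)"
proof -
  obtain c where c: "c > 0" "eventually (\<lambda>n. norm (best_approx N f n) \<le> c * norm (real n powr (- \<beta>))) at_top"
    using landau_o.bigE[OF O] by blast
  then obtain n0 where n0: "\<And>n. n \<ge> n0 \<Longrightarrow> norm (best_approx N f n) \<le> c * norm (real n powr (- \<beta>))"
    unfolding eventually_at_top_linorder by blast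
  define A where "A = N (fourier_coeff f)"
  have A0: "A \<ge> 0" unfolding A_def by (rule N_nonneg[OF orl NN Vf[OF orl NN SM]])
  define K where "K = c + A * (real n0 + 1) powr \<beta>"
  have K0: "K > 0" unfolding K_def using c(1) A0 by (simp add: add_pos_nonneg)
  have "best_approx N f j \<le> K * real j powr (- \<beta>)" if j: "j \<ge> 1" for j
  proof (cases "j \<ge> n0")
    case True
    have "best_approx N f j \<le> c * real j powr (- \<beta>)" using n0[OF True] by simp
    also have "\<dots> \<le> K * real j powr (- \<beta>)" unfolding K_def using A0
      by (intro mult_right_mono) auto
    finally show ?thesis .
  next
    case False
    have jp: "real j > 0" using j by simp
    have one: "real j powr \<beta> * real j powr (- \<beta>) = 1" using jp by (simp add: powr_add[symmetric])
    have "best_approx N f j \<le> A" unfolding A_def by (rule E_le_N[OF orl NN SM])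
    also have "\<dots> = A * (real j powr \<beta> * real j powr (- \<beta>))" using one by simp
    also have "\<dots> \<le> A * ((real n0 + 1) powr \<beta> * real j powr (- \<beta>))"
      using False b A0 by (intro mult_left_mono mult_right_mono powr_mono2) auto
    also have "\<dots> \<le> K * real j powr (- \<beta>)" unfolding K_def using c(1)
      by (simp add: algebra_simps)
    finally show ?thesis .
  qed
  then show ?thesis using K0 by blast
qed

lemma modulus_G:
  fixes \<alpha> \<beta> K t :: real and n :: nat
  assumes a: "\<alpha> > 0" and K: "\<forall>j\<ge>1. best_approx N f j \<le> K * real j powr (- \<beta>)" "K > 0"
    and b: "\<beta> > 0" and t: "0 < t" and n: "1 \<le> 2^n * t"
  shows "modulus N \<alpha> f t \<le> K * 2 powr \<alpha> * (t powr \<beta> + t powr \<alpha> * (\<Sum>m<n. (2 powr (\<alpha> - \<beta>))^m))"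
proof -
  have Ej: "best_approx N f (2^m) \<le> K * (2^m) powr (- \<beta>)" for m
    using K(1)[rule_format, of "2^m"] by simp
  have t1: "2 powr \<alpha> * best_approx N f (2^n) \<le> K * 2 powr \<alpha> * t powr \<beta>"
  proof -
    have "((2::real)^n) powr (- \<beta>) \<le> (1 / t) powr (- \<beta>)"
      using t n b by (intro powr_mono2') (auto simp: field_simps)
    also have "(1 / t) powr (- \<beta>) = t powr \<beta>" using t by (simp add: powr_divide powr_minus)
    finally have "best_approx N f (2^n) \<le> K * t powr \<beta>"
      using Ej[of n] K(2) by (meson mult_left_mono less_imp_le order_trans)
    then show ?thesis by (simp add: mult_left_mono mult.assoc)
  qed
  have t2: "(2^(m+1) * t) powr \<alpha> * best_approx N f (2^m) \<le> K * 2 powr \<alpha> * (t powr \<alpha> * (2 powr (\<alpha> - \<beta>))^m)" for m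
  proof -
    have A: "(2^(m+1) * t) powr \<alpha> * best_approx N f (2^m) \<le> (2^(m+1) * t) powr \<alpha> * (K * (2^m) powr (- \<beta>))"
      using Ej[of m] by (intro mult_left_mono) auto
    have e1: "(2^(m+1) * t) powr \<alpha> = 2 powr \<alpha> * ((2::real)^m) powr \<alpha> * t powr \<alpha>"
      using t by (simp add: powr_mult)
    have "((2::real)^m) powr \<alpha> * (2^m) powr (- \<beta>) = ((2::real)^m) powr (\<alpha> - \<beta>)"
      by (simp only: powr_add[symmetric] diff_conv_add_uminus)
    also have "\<dots> = (2 powr (\<alpha> - \<beta>))^m" by (rule pow2_powr)
    finally have e2: "((2::real)^m) powr \<alpha> * (2^m) powr (- \<beta>) = (2 powr (\<alpha> - \<beta>))^m" .
    have "(2^(m+1) * t) powr \<alpha> * (K * (2^m) powr (- \<beta>)) = K * 2 powr \<alpha> * (t powr \<alpha> * (((2::real)^m) powr \<alpha> * (2^m) powr (- \<beta>)))"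
      unfolding e1 by (simp add: algebra_simps)
    also have "\<dots> = K * 2 powr \<alpha> * (t powr \<alpha> * (2 powr (\<alpha> - \<beta>))^m)" unfolding e2 ..
    finally have B: "(2^(m+1) * t) powr \<alpha> * (K * (2^m) powr (- \<beta>)) = K * 2 powr \<alpha> * (t powr \<alpha> * (2 powr (\<alpha> - \<beta>))^m)" .
    show ?thesis using A unfolding B .
  qed
  have "modulus N \<alpha> f t \<le> 2 powr \<alpha> * best_approx N f (2^n) + (\<Sum>m<n. (2^(m+1) * t) powr \<alpha> * best_approx N f (2^m))"
    using modulus_bound(2)[OF orl NN SM a, of t n] t by simp
  also have "\<dots> \<le> K * 2 powr \<alpha> * t powr \<beta> + (\<Sum>m<n. K * 2 powr \<alpha> * (t powr \<alpha> * (2 powr (\<alpha> - \<beta>))^m))"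
    by (intro add_mono t1 sum_mono t2)
  also have "\<dots> = K * 2 powr \<alpha> * (t powr \<beta> + t powr \<alpha> * (\<Sum>m<n. (2 powr (\<alpha> - \<beta>))^m))"
    by (simp add: sum_distrib_left algebra_simps)
  finally show ?thesis .
qed

end

theorem corollary4:
  fixes Ms :: "int \<Rightarrow> real \<Rightarrow> real" and f :: "real \<Rightarrow> complex"
    and N :: "(int \<Rightarrow> complex) \<Rightarrow> real" and \<alpha> \<beta> :: real
  assumes "\<forall>k. orlicz_fn (Ms k)"
    and "in_SM Ms f"
    and "N = lux_norm Ms \<or> N = orlicz_norm Ms"
    and "\<beta> > 0"
    and "(\<lambda>n. best_approx N f n) \<in> O(\<lambda>n. real n powr (- \<beta>))"
    and "\<alpha> > 0"
  shows "(\<beta> < \<alpha> \<longrightarrow> (\<lambda>t. modulus N \<alpha> f t) \<in> O[at_right 0](\<lambda>t. t powr \<beta>))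
       \<and> (\<beta> = \<alpha> \<longrightarrow> (\<lambda>t. modulus N \<alpha> f t) \<in> O[at_right 0](\<lambda>t. t powr \<alpha> * \<bar>ln t\<bar>))
       \<and> (\<beta> > \<alpha> \<longrightarrow> (\<lambda>t. modulus N \<alpha> f t) \<in> O[at_right 0](\<lambda>t. t powr \<alpha>))"
proof -
  note orl = assms(1) and SM = assms(2) and NN = assms(3) and b = assms(4) and O = assms(5) and a = assms(6)
  obtain K where K: "K > 0" "\<forall>j\<ge>1. best_approx N f j \<le> K * real j powr (- \<beta>)"
    using E_bound[OF orl NN SM O b] by blast
  define q where "q = 2 powr (\<alpha> - \<beta>)"
  have MG: "modulus N \<alpha> f t \<le> K * 2 powr \<alpha> * (t powr \<beta> + t powr \<alpha> * (\<Sum>m<n. q^m))"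
    if "0 < t" "1 \<le> 2^n * t" for t n
    unfolding q_def by (rule modulus_G[OF orl NN SM a K(2) K(1) b that])
  have M0: "0 \<le> modulus N \<alpha> f t" if "0 \<le> t" for t
    by (rule modulus_bound(1)[OF orl NN SM a that])
  have KP: "K * 2 powr \<alpha> > 0" using K(1) by simp
  have e1: "exp (-1::real) < 1" by simp
  show ?thesis
  proof (intro conjI impI)
    assume ab: "\<beta> < \<alpha>"
    define C where "C = K * 2 powr \<alpha> * (1 + 2 powr (\<alpha> - \<beta>) / (q - 1))"
    show "(\<lambda>t. modulus N \<alpha> f t) \<in> O[at_right 0](\<lambda>t. t powr \<beta>)"
    proof (rule bigoI[where c = C])
      show "eventually (\<lambda>t. norm (modulus N \<alpha> f t) \<le> C * norm (t powr \<beta>)) (at_right 0)"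
        using eventually_at_right_real[of 0 "1::real", simplified]
      proof eventually_elim
        case (elim t)
        then have t: "0 < t" "t < 1" by auto
        obtain n where n: "n \<ge> 1" "1 \<le> 2^n * t" "2^n * t < 2" using dyadic_n[OF t] by blast
        have "modulus N \<alpha> f t \<le> K * 2 powr \<alpha> * (t powr \<beta> + t powr \<alpha> * (\<Sum>m<n. q^m))" using MG t n by simp
        also have "\<dots> \<le> K * 2 powr \<alpha> * ((1 + 2 powr (\<alpha> - \<beta>) / (q - 1)) * t powr \<beta>)"
          using G_lt[OF ab t(1) n(3)] KP unfolding q_def by (intro mult_left_mono) auto
        finally show ?case using M0[of t] t by (simp add: C_def mult.assoc)
      qed
    qed
  next
    assume ab: "\<beta> = \<alpha>"
    define C where "C = K * 2 powr \<alpha> * (2 + 1 / ln 2)"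
    show "(\<lambda>t. modulus N \<alpha> f t) \<in> O[at_right 0](\<lambda>t. t powr \<alpha> * \<bar>ln t\<bar>)"
    proof (rule bigoI[where c = C])
      show "eventually (\<lambda>t. norm (modulus N \<alpha> f t) \<le> C * norm (t powr \<alpha> * \<bar>ln t\<bar>)) (at_right 0)"
        using eventually_at_right_real[of 0 "exp (-1)", simplified]
      proof eventually_elim
        case (elim t)
        have t0: "0 < t" "t < exp (-1)" using elim by auto
        have t: "0 < t" "t \<le> exp (-1)" "t < 1" using t0 e1 by linarith+
        obtain n where n: "n \<ge> 1" "1 \<le> 2^n * t" "2^n * t < 2" using dyadic_n[OF t(1) t(3)] by blast
        have "modulus N \<alpha> f t \<le> K * 2 powr \<alpha> * (t powr \<alpha> + t powr \<alpha> * (\<Sum>m<n. (2 powr (\<alpha> - \<alpha>))^m))"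
          using MG[OF t(1) n(2)] ab unfolding q_def by simp
        also have "\<dots> \<le> K * 2 powr \<alpha> * ((2 + 1 / ln 2) * (t powr \<alpha> * \<bar>ln t\<bar>))"
          using G_eq[OF t(1) t(2) n(3) n(1), of \<alpha>] KP by (intro mult_left_mono) auto
        finally have X: "modulus N \<alpha> f t \<le> C * (t powr \<alpha> * \<bar>ln t\<bar>)" by (simp only: C_def mult.assoc)
        have nn: "norm (t powr \<alpha> * \<bar>ln t\<bar>) = t powr \<alpha> * \<bar>ln t\<bar>" by (simp add: abs_mult)
        have nm: "norm (modulus N \<alpha> f t) = modulus N \<alpha> f t" using M0[of t] t by simp
        show ?case unfolding nn nm using X .
      qed
    qed
  next
    assume ab: "\<alpha> < \<beta>"
    define C where "C = K * 2 powr \<alpha> * (1 + 1 / (1 - q))"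
    show "(\<lambda>t. modulus N \<alpha> f t) \<in> O[at_right 0](\<lambda>t. t powr \<alpha>)"
    proof (rule bigoI[where c = C])
      show "eventually (\<lambda>t. norm (modulus N \<alpha> f t) \<le> C * norm (t powr \<alpha>)) (at_right 0)"
        using eventually_at_right_real[of 0 "1::real", simplified]
      proof eventually_elim
        case (elim t)
        then have t: "0 < t" "t < 1" by auto
        obtain n where n: "n \<ge> 1" "1 \<le> 2^n * t" "2^n * t < 2" using dyadic_n[OF t] by blast
        have "modulus N \<alpha> f t \<le> K * 2 powr \<alpha> * (t powr \<beta> + t powr \<alpha> * (\<Sum>m<n. q^m))" using MG t n by simp
        also have "\<dots> \<le> K * 2 powr \<alpha> * ((1 + 1 / (1 - q)) * t powr \<alpha>)"
          using G_gt[OF ab t, of n] KP unfolding q_def by (intro mult_left_mono) auto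
        finally show ?case using M0[of t] t by (simp add: C_def mult.assoc)
      qed
    qed
  qed
qed


end
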